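(* Let $\sigma\subseteq[n]$ be an edge or a triangle on $\gamma_2$. Then there is a triangulation $T(\sigma)\in S(n,2)$ such that $\sigma\in T(\sigma)$ and, for every edge or triangle $\tau\subseteq[n]$ with $\tau\ne\sigma$ such that either $\tau$ does not overlap $\sigma$ in $\mathbb{R}^2$ or $\tau<_3\sigma$, we have $\tau\le_3 T(\sigma)$.
   Context: $\gamma_d=\{(t,t^2,\dots,t^d):t\in\mathbb{R}\}$. Fix $t_1<\dots<t_n$ and the points $\gamma_2(t_i)$, identified with $i\in[n]$; $C(n,2)$ is their convex hull (a convex $n$-gon) and $S(n,2)$ the set of triangulations of $C(n,2)$ with vertices in $[n]$. Simplices (edges, triangles) are subsets of $[n]$ identified with their convex hulls; $\sigma,\tau$ overlap if $\mathrm{conv}(\sigma)\cap\mathrm{conv}(\tau)\supsetneq\mathrm{conv}(\sigma\cap\tau)$. The height function $h_\sigma:\mathrm{conv}(\sigma)\to\mathbb{R}$ gives the last coordinate of the point in the convex hull of the lifted points $\gamma_3(t_i)$, $i\in\sigma$, projecting to $p$. $\sigma<_3\tau$ means $\sigma,\tau$ overlap in $\mathbb{R}^2$ and $h_\sigma\le h_\tau$ on the common domain. For $T\in S(n,2)$, $h_T(p)=h_\rho(p)$ for $p\in\mathrm{conv}(\rho)$, $\rho\in T$, and $\tau\le_3T$ means $h_\tau\le h_T$ on $\mathrm{conv}(\tau)$. *)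

theory Defs
  imports "HOL-Analysis.Analysis"
begin

text \<open>Points on the moment curves; the parameters are given by t :: nat => real,
  the index set [n] is {1..n}.\<close>

definition gamma2 :: "real \<Rightarrow> real \<times> real" where
  "gamma2 s = (s, s^2)"

definition gamma3 :: "real \<Rightarrow> real \<times> real \<times> real" where
  "gamma3 s = (s, s^2, s^3)"

definition cnv :: "(nat \<Rightarrow> real) \<Rightarrow> nat set \<Rightarrow> (real \<times> real) set" where
  "cnv t \<sigma> = convex hull ((\<lambda>i. gamma2 (t i)) ` \<sigma>)"

definition overlap :: "(nat \<Rightarrow> real) \<Rightarrow> nat set \<Rightarrow> nat set \<Rightarrow> bool" where
  "overlap t \<sigma> \<tau> \<longleftrightarrow> cnv t (\<sigma> \<inter> \<tau>) \<subset> cnv t \<sigma> \<inter> cnv t \<tau>"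

definition height :: "(nat \<Rightarrow> real) \<Rightarrow> nat set \<Rightarrow> real \<times> real \<Rightarrow> real" where
  "height t \<sigma> p = (THE z. (fst p, snd p, z) \<in> convex hull ((\<lambda>i. gamma3 (t i)) ` \<sigma>))"

definition below3 :: "(nat \<Rightarrow> real) \<Rightarrow> nat set \<Rightarrow> nat set \<Rightarrow> bool" where
  "below3 t \<sigma> \<tau> \<longleftrightarrow> overlap t \<sigma> \<tau> \<and>
     (\<forall>p \<in> cnv t \<sigma> \<inter> cnv t \<tau>. height t \<sigma> p \<le> height t \<tau> p)"

definition edge_or_triangle :: "nat \<Rightarrow> nat set \<Rightarrow> bool" where
  "edge_or_triangle n \<sigma> \<longleftrightarrow> \<sigma> \<subseteq> {1..n} \<and> (card \<sigma> = 2 \<or> card \<sigma> = 3)"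

definition triangulation :: "nat \<Rightarrow> (nat \<Rightarrow> real) \<Rightarrow> nat set set \<Rightarrow> bool" where
  "triangulation n t T \<longleftrightarrow>
     (\<forall>\<rho>\<in>T. \<rho> \<subseteq> {1..n} \<and> card \<rho> = 3) \<and>
     (\<forall>\<rho>\<in>T. \<forall>\<rho>'\<in>T. \<rho> \<noteq> \<rho>' \<longrightarrow> \<not> overlap t \<rho> \<rho>') \<and>
     (\<Union>\<rho>\<in>T. cnv t \<rho>) = cnv t {1..n}"

text \<open>A simplex belongs to the triangulation (as a simplicial complex) iff it is a
  face of one of its triangles.\<close>
definition in_triang :: "nat set \<Rightarrow> nat set set \<Rightarrow> bool" where
  "in_triang \<sigma> T \<longleftrightarrow> (\<exists>\<rho>\<in>T. \<sigma> \<subseteq> \<rho>)"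

text \<open>tau <=_3 T: h_tau <= h_T on conv(tau), where h_T(p) = h_rho(p) for p in conv(rho).\<close>
definition below3_T :: "(nat \<Rightarrow> real) \<Rightarrow> nat set \<Rightarrow> nat set set \<Rightarrow> bool" where
  "below3_T t \<tau> T \<longleftrightarrow>
     (\<forall>p \<in> cnv t \<tau>. \<forall>\<rho>\<in>T. p \<in> cnv t \<rho> \<longrightarrow> height t \<tau> p \<le> height t \<rho> p)"

end

theory Submission
  imports Defs
begin


lemma sum_pair2: "(\<Sum>k\<in>S. l k *\<^sub>R gamma2 (s k)) = ((\<Sum>k\<in>S. l k * s k), (\<Sum>k\<in>S. l k * (s k)^2))"
  by (simp add: gamma2_def prod_eq_iff fst_sum snd_sum)

lemma sum_pair3: "(\<Sum>k\<in>S. l k *\<^sub>R gamma3 (s k)) = ((\<Sum>k\<in>S. l k * s k), (\<Sum>k\<in>S. l k * (s k)^2), (\<Sum>k\<in>S. l k * (s k)^3))"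
  by (simp add: gamma3_def prod_eq_iff fst_sum snd_sum)

lemma hull_image_iff:
  fixes g :: "nat \<Rightarrow> 'a::real_vector"
  assumes "finite S" "inj_on g S"
  shows "p \<in> convex hull (g ` S) \<longleftrightarrow> (\<exists>l. (\<forall>k\<in>S. 0 \<le> l k) \<and> sum l S = 1 \<and> (\<Sum>k\<in>S. l k *\<^sub>R g k) = p)"
proof
  assume "p \<in> convex hull (g ` S)"
  then obtain u where u: "\<forall>x\<in>g ` S. 0 \<le> u x" "sum u (g ` S) = 1" "(\<Sum>x\<in>g ` S. u x *\<^sub>R x) = p"
    using convex_hull_finite[of "g ` S"] assms by auto
  show "\<exists>l. (\<forall>k\<in>S. 0 \<le> l k) \<and> sum l S = 1 \<and> (\<Sum>k\<in>S. l k *\<^sub>R g k) = p"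
    apply (rule exI[of _ "u \<circ> g"])
    using u sum.reindex[OF assms(2), of u] sum.reindex[OF assms(2), of "\<lambda>x. u x *\<^sub>R x"] by auto
next
  assume "\<exists>l. (\<forall>k\<in>S. 0 \<le> l k) \<and> sum l S = 1 \<and> (\<Sum>k\<in>S. l k *\<^sub>R g k) = p"
  then obtain l where l: "\<forall>k\<in>S. 0 \<le> l k" "sum l S = 1" "(\<Sum>k\<in>S. l k *\<^sub>R g k) = p" by blast
  have "(\<Sum>k\<in>S. l k *\<^sub>R g k) \<in> convex hull (g ` S)"
    by (rule convex_sum) (use assms l in \<open>auto intro: hull_inc\<close>)
  then show "p \<in> convex hull (g ` S)" using l by simp
qed

definition rep :: "(nat \<Rightarrow> real) \<Rightarrow> nat set \<Rightarrow> (nat \<Rightarrow> real) \<Rightarrow> real \<times> real \<Rightarrow> bool" where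
  "rep t S l p \<longleftrightarrow> (\<forall>k\<in>S. 0 \<le> l k) \<and> sum l S = 1 \<and> (\<Sum>k\<in>S. l k * t k) = fst p \<and> (\<Sum>k\<in>S. l k * (t k)^2) = snd p"

lemma two_avoid:
  fixes X :: "real set"
  assumes "finite X" "card X \<le> 2" "y \<notin> X"
  shows "\<exists>r1 r2. X \<subseteq> {r1, r2} \<and> r1 \<noteq> y \<and> r2 \<noteq> y"
proof -
  have "card X = 0 \<or> card X = 1 \<or> card X = 2" using assms(2) by auto
  then show ?thesis
  proof (elim disjE)
    assume "card X = 0" then have "X = {}" using assms(1) by simp
    then show ?thesis by (intro exI[of _ "y+1"]) auto
  next
    assume "card X = 1" then obtain a where "X = {a}" by (meson card_1_singletonE)
    then show ?thesis using assms(3) by (intro exI[of _ a]) auto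
  next
    assume "card X = 2" then obtain a b where "X = {a, b}" by (meson card_2_iff)
    then show ?thesis using assms(3) by auto
  qed
qed

lemma cubic_id:
  fixes x y z :: real
  shows "(\<Sum>k\<in>S. l k * (s k)^3) = (\<Sum>k\<in>S. l k * ((s k - x) * (s k - y) * (s k - z)))
     + (x+y+z) * (\<Sum>k\<in>S. l k * (s k)^2) - (x*y+y*z+z*x) * (\<Sum>k\<in>S. l k * s k) + x*y*z * sum l S"
proof -
  have "\<And>k. l k * (s k)^3 = l k * ((s k - x) * (s k - y) * (s k - z)) + (x+y+z) * (l k * (s k)^2)
     - (x*y+y*z+z*x) * (l k * s k) + x*y*z * l k"
    by (simp add: algebra_simps power2_eq_square power3_eq_cube)
  then show ?thesis
    by (simp add: sum.distrib sum_subtractf sum_distrib_left[symmetric])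
qed



lemma cross_conv:
  fixes f :: "real \<times> real \<Rightarrow> real" and C :: "(real \<times> real) set"
  assumes aff: "\<And>a b x y. a + b = 1 \<Longrightarrow> f (a *\<^sub>R x + b *\<^sub>R y) = a * f x + b * f y"
    and C: "convex C" "y \<in> C" and fy: "f y \<le> 0" and fx: "f x > 0"
    and ab: "a \<ge> 0" "b \<ge> 0" "a + b = 1" and fp: "f (a *\<^sub>R y + b *\<^sub>R x) \<le> 0"
    and hyp: "\<And>\<theta>. 0 \<le> \<theta> \<Longrightarrow> \<theta> \<le> 1 \<Longrightarrow> f (\<theta> *\<^sub>R x + (1-\<theta>) *\<^sub>R y) = 0 \<Longrightarrow> \<theta> *\<^sub>R x + (1-\<theta>) *\<^sub>R y \<in> C"
  shows "a *\<^sub>R y + b *\<^sub>R x \<in> C"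
proof (cases "b = 0")
  case True
  then show ?thesis using ab C by simp
next
  case False
  then have bpos: "b > 0" using ab by simp
  have fp': "a * f y + b * f x \<le> 0" using fp aff[OF ab(3)] by simp
  have fyneg: "f y < 0"
  proof (rule ccontr)
    assume "\<not> f y < 0" then have "f y = 0" using fy by simp
    then show False using fp' bpos fx by (simp add: mult_le_0_iff)
  qed
  define \<theta> where "\<theta> = f y / (f y - f x)"
  have th0: "\<theta> > 0" unfolding \<theta>_def using fyneg fx by (simp add: divide_neg_neg)
  have th1: "\<theta> \<le> 1" unfolding \<theta>_def using fyneg fx by (simp add: divide_simps)
  have fr: "f (\<theta> *\<^sub>R x + (1-\<theta>) *\<^sub>R y) = 0"
    unfolding aff[of \<theta> "1-\<theta>", simplified] unfolding \<theta>_def using fyneg fx by (simp add: field_simps)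
  have r: "\<theta> *\<^sub>R x + (1-\<theta>) *\<^sub>R y \<in> C" using hyp[OF _ th1 fr] th0 by simp
  have bth: "b \<le> \<theta>"
  proof -
    have "f y = a * f y + b * f y" using ab(3) by (metis distrib_right mult_1)
    then have "f y + b * (f x - f y) = a * f y + b * f x" by (simp add: algebra_simps)
    then have "f y + b * (f x - f y) \<le> 0" using fp' by linarith
    then have "b * (f x - f y) \<le> - f y" by simp
    then show ?thesis unfolding \<theta>_def using fyneg fx by (simp add: field_simps)
  qed
  have eq: "a *\<^sub>R y + b *\<^sub>R x = (b/\<theta>) *\<^sub>R (\<theta> *\<^sub>R x + (1-\<theta>) *\<^sub>R y) + (1 - b/\<theta>) *\<^sub>R y"
    using th0 ab(3) by (simp add: prod_eq_iff field_simps) (metis distrib_right mult_1)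
  show ?thesis unfolding eq
    by (rule convexD[OF C(1) r C(2)]) (use th0 bth bpos in \<open>auto simp: field_simps\<close>)
qed


definition qf :: "real \<Rightarrow> real \<Rightarrow> real \<times> real \<Rightarrow> real" where
  "qf a b p = snd p - (a + b) * fst p + a * b"

lemma qf_aff: "a' + b' = 1 \<Longrightarrow> qf a b (a' *\<^sub>R x + b' *\<^sub>R y) = a' * qf a b x + b' * qf a b y"
proof -
  assume h: "a' + b' = 1"
  have "a' * qf a b x + b' * qf a b y = a' * snd x + b' * snd y - (a+b)*(a' * fst x + b' * fst y) + (a'+b')*(a*b)"
    by (simp add: qf_def algebra_simps)
  then show ?thesis using h by (simp add: qf_def)
qed

lemma qf_rep: "rep t S l p \<Longrightarrow> qf a b p = (\<Sum>k\<in>S. l k * ((t k - a) * (t k - b)))"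
proof -
  assume r: "rep t S l p"
  have "(\<Sum>k\<in>S. l k * ((t k - a) * (t k - b))) = (\<Sum>k\<in>S. l k * (t k)^2 - (a + b) * (l k * t k) + a * b * l k)"
    by (rule sum.cong) (auto simp: algebra_simps power2_eq_square)
  also have "\<dots> = snd p - (a + b) * fst p + a * b"
    using r unfolding rep_def by (simp add: sum.distrib sum_subtractf sum_distrib_left[symmetric])
  finally show ?thesis unfolding qf_def by simp
qed

lemma sq_rep: "rep t S l p \<Longrightarrow> (\<Sum>k\<in>S. l k * (t k - a)^2) = snd p - 2 * a * fst p + a^2"
proof -
  assume r: "rep t S l p"
  have "(\<Sum>k\<in>S. l k * (t k - a)^2) = (\<Sum>k\<in>S. l k * (t k)^2 - (2 * a) * (l k * t k) + a^2 * l k)"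
    by (rule sum.cong) (auto simp: algebra_simps power2_eq_square)
  also have "\<dots> = snd p - 2 * a * fst p + a^2"
    using r unfolding rep_def by (simp add: sum.distrib sum_subtractf sum_distrib_left[symmetric])
  finally show ?thesis .
qed


lemma pair_alg:
  fixes A B x :: real assumes "A < B"
  shows "(B-x)/(B-A) + (x-A)/(B-A) = 1" "(B-x)/(B-A)*A + (x-A)/(B-A)*B = x"
    "(B-x)/(B-A)*A^2 + (x-A)/(B-A)*B^2 = (A+B)*x - A*B"
proof -
  have d: "B - A \<noteq> 0" using assms by simp
  have "(B-x)/(B-A) + (x-A)/(B-A) = ((B-x)+(x-A))/(B-A)" by (rule add_divide_distrib[symmetric])
  then show "(B-x)/(B-A) + (x-A)/(B-A) = 1" using d by simp
  have "(B-x)*A + (x-A)*B = x * (B - A)" by (simp add: algebra_simps)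
  moreover have "(B-x)/(B-A)*A + (x-A)/(B-A)*B = ((B-x)*A + (x-A)*B)/(B-A)"
    by (simp add: add_divide_distrib)
  ultimately show "(B-x)/(B-A)*A + (x-A)/(B-A)*B = x" using d by simp
  have "(B-x)*A^2 + (x-A)*B^2 = ((A+B)*x - A*B) * (B - A)" by (simp add: algebra_simps power2_eq_square)
  moreover have "(B-x)/(B-A)*A^2 + (x-A)/(B-A)*B^2 = ((B-x)*A^2 + (x-A)*B^2)/(B-A)"
    by (simp add: add_divide_distrib)
  ultimately show "(B-x)/(B-A)*A^2 + (x-A)/(B-A)*B^2 = (A+B)*x - A*B" using d
    by simp
qed



lemma rep_sub:
  assumes "rep t S l p" "S' \<subseteq> S" "finite S" "\<forall>k\<in>S - S'. l k = 0"
  shows "rep t S' l p"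
proof -
  have "sum l S' = sum l S" by (rule sum.mono_neutral_left) (use assms in auto)
  moreover have "(\<Sum>k\<in>S'. l k * t k) = (\<Sum>k\<in>S. l k * t k)" by (rule sum.mono_neutral_left) (use assms in auto)
  moreover have "(\<Sum>k\<in>S'. l k * (t k)^2) = (\<Sum>k\<in>S. l k * (t k)^2)" by (rule sum.mono_neutral_left) (use assms in auto)
  ultimately show ?thesis using assms(1,2) unfolding rep_def by auto
qed

lemma rep_super:
  assumes "rep t S l p" "S \<subseteq> S'" "finite S'"
  shows "rep t S' (\<lambda>k. if k \<in> S then l k else 0) p"
proof -
  let ?l = "\<lambda>k. if k \<in> S then l k else 0"
  have fS: "finite S" using assms finite_subset by blast
  have "sum ?l S' = sum ?l S" by (rule sum.mono_neutral_right) (use assms in auto)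
  moreover have "(\<Sum>k\<in>S'. ?l k * t k) = (\<Sum>k\<in>S. ?l k * t k)" by (rule sum.mono_neutral_right) (use assms in auto)
  moreover have "(\<Sum>k\<in>S'. ?l k * (t k)^2) = (\<Sum>k\<in>S. ?l k * (t k)^2)" by (rule sum.mono_neutral_right) (use assms in auto)
  moreover have "sum ?l S = sum l S" "(\<Sum>k\<in>S. ?l k * t k) = (\<Sum>k\<in>S. l k * t k)"
     "(\<Sum>k\<in>S. ?l k * (t k)^2) = (\<Sum>k\<in>S. l k * (t k)^2)" by (auto intro: sum.cong)
  ultimately show ?thesis using assms(1) unfolding rep_def by auto
qed

lemma not_overlap_I: "cnv t A \<inter> cnv t B \<subseteq> cnv t (A \<inter> B) \<Longrightarrow> \<not> overlap t A B"
  unfolding overlap_def by blast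

lemma overlap_sym: "overlap t A B \<longleftrightarrow> overlap t B A"
  unfolding overlap_def by (simp add: Int_commute)


lemma un3: "A \<subseteq> B \<union> C \<Longrightarrow> B \<subseteq> U \<Longrightarrow> C \<subseteq> U \<Longrightarrow> A \<subseteq> U" by blast

definition fan :: "nat \<Rightarrow> nat \<Rightarrow> nat \<Rightarrow> nat set set" where
  "fan u v m = {{i, Suc i, m} | i. u \<le> i \<and> Suc i \<le> v}"

definition Tr :: "nat \<Rightarrow> nat \<Rightarrow> nat \<Rightarrow> nat \<Rightarrow> nat set set" where
  "Tr n a b c = {{a,b,c}} \<union> fan a (b-1) b \<union> fan b (c-1) c \<union> fan 1 a n \<union> (if c < n then {{a,c,n}} else {}) \<union> fan c (n-1) n"


definition SEP :: "nat \<Rightarrow> nat set \<Rightarrow> nat set \<Rightarrow> bool" where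
  "SEP n R R' \<longleftrightarrow> (\<exists>u v. 1 \<le> u \<and> v \<le> n \<and> u < v \<and> (\<forall>k\<in>R. k \<le> u \<or> v \<le> k) \<and> (\<forall>k\<in>R'. u \<le> k \<and> k \<le> v))"

lemma SEP_I: "1 \<le> u \<Longrightarrow> v \<le> n \<Longrightarrow> u < v \<Longrightarrow> (\<forall>k\<in>R. k \<le> u \<or> v \<le> k) \<Longrightarrow> (\<forall>k\<in>R'. u \<le> k \<and> k \<le> v) \<Longrightarrow> SEP n R R'"
  unfolding SEP_def by blast

lemma fan_mem: "R \<in> fan u v m \<longleftrightarrow> (\<exists>i. R = {i, Suc i, m} \<and> u \<le> i \<and> Suc i \<le> v)"
  unfolding fan_def by blast

lemma sep_fan_fan:
  assumes "R \<in> fan u v m" "R' \<in> fan u v m" "R \<noteq> R'" "1 \<le> u" "v < m" "m \<le> n"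
  shows "SEP n R R' \<or> SEP n R' R"
proof -
  obtain i where i: "R = {i, Suc i, m}" "u \<le> i" "Suc i \<le> v" using assms(1) fan_mem by blast
  obtain j where j: "R' = {j, Suc j, m}" "u \<le> j" "Suc j \<le> v" using assms(2) fan_mem by blast
  have "i \<noteq> j" using i j assms(3) by blast
  then consider "i < j" | "j < i" by linarith
  then show ?thesis
  proof cases
    case 1
    have "SEP n R R'" by (rule SEP_I[of "Suc i" m]) (use i j 1 assms in auto)
    then show ?thesis by blast
  next
    case 2
    have "SEP n R' R" by (rule SEP_I[of "Suc j" m]) (use i j 2 assms in auto)
    then show ?thesis by blast
  qed
qed

lemma sep_chord_in:
  fixes u v u' v' m :: nat
  assumes "R \<in> fan u' v' m" "u \<le> u'" "m \<le> v" "v' < m" "1 \<le> u" "v \<le> n" "u < v" "\<forall>k\<in>R'. k \<le> u \<or> v \<le> k"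
  shows "SEP n R' R"
proof -
  obtain i where i: "R = {i, Suc i, m}" "u' \<le> i" "Suc i \<le> v'" using assms(1) fan_mem by blast
  show ?thesis by (rule SEP_I[of u v]) (use i assms in auto)
qed



context fixes n :: nat and t :: "nat \<Rightarrow> real" assumes mono: "strict_mono_on {1..n} t"
begin

lemma tless: "i \<in> {1..n} \<Longrightarrow> j \<in> {1..n} \<Longrightarrow> t i < t j \<longleftrightarrow> i < j"
  using mono by (metis linorder_neqE_nat not_less_iff_gr_or_eq strict_mono_on_def)

lemma tle: "i \<in> {1..n} \<Longrightarrow> j \<in> {1..n} \<Longrightarrow> t i \<le> t j \<longleftrightarrow> i \<le> j"
  using tless by (meson linorder_not_le)

lemma teq: "i \<in> {1..n} \<Longrightarrow> j \<in> {1..n} \<Longrightarrow> t i = t j \<longleftrightarrow> i = j"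
  using tle[of i j] tle[of j i] by auto

lemma inj_t: "S \<subseteq> {1..n} \<Longrightarrow> inj_on t S"
  unfolding inj_on_def using teq by (meson subsetD)

lemma inj_g2: "S \<subseteq> {1..n} \<Longrightarrow> inj_on (\<lambda>i. gamma2 (t i)) S"
  unfolding inj_on_def gamma2_def using teq by (metis fst_conv subsetD)

lemma inj_g3: "S \<subseteq> {1..n} \<Longrightarrow> inj_on (\<lambda>i. gamma3 (t i)) S"
  unfolding inj_on_def gamma3_def using teq by (metis fst_conv subsetD)

lemma cnv_iff:
  assumes "S \<subseteq> {1..n}"
  shows "p \<in> cnv t S \<longleftrightarrow> (\<exists>l. rep t S l p)"
proof -
  have fin: "finite S" using assms finite_subset by blast
  have "cnv t S = convex hull ((\<lambda>i. gamma2 (t i)) ` S)" unfolding cnv_def by (simp add: image_image)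
  moreover have "p \<in> convex hull ((\<lambda>i. gamma2 (t i)) ` S) \<longleftrightarrow> (\<exists>l. (\<forall>k\<in>S. 0 \<le> l k) \<and> sum l S = 1 \<and> (\<Sum>k\<in>S. l k *\<^sub>R gamma2 (t k)) = p)"
    using hull_image_iff[OF fin inj_g2[OF assms]] by simp
  ultimately show ?thesis
    unfolding rep_def sum_pair2 by (auto simp: prod_eq_iff)
qed

lemma mom_zero:
  assumes S: "S \<subseteq> {1..n}" "card S \<le> 3"
    and d: "sum d S = 0" "(\<Sum>k\<in>S. d k * t k) = 0" "(\<Sum>k\<in>S. d k * (t k)^2) = 0"
    and k: "k \<in> S"
  shows "d k = 0"
proof -
  have fin: "finite S" using S finite_subset by blast
  have c: "card (t ` (S - {k})) \<le> 2"
    using card_image_le[of "S - {k}" t] fin k S(2) by (simp add: card_Diff_singleton) 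
  have nk: "t k \<notin> t ` (S - {k})" using inj_t[OF S(1)] k by (auto simp: inj_on_def)
  obtain r1 r2 where r: "t ` (S - {k}) \<subseteq> {r1, r2}" "r1 \<noteq> t k" "r2 \<noteq> t k"
    using two_avoid[OF _ c nk] fin by blast
  have "(\<Sum>j\<in>S. d j * ((t j - r1) * (t j - r2))) = (\<Sum>j\<in>S. d j * (t j)^2 - (r1 + r2) * (d j * t j) + r1 * r2 * d j)"
    by (rule sum.cong) (auto simp: algebra_simps power2_eq_square)
  also have "\<dots> = 0" using d by (simp add: sum.distrib sum_subtractf sum_distrib_left[symmetric])
  finally have z: "(\<Sum>j\<in>S. d j * ((t j - r1) * (t j - r2))) = 0" .
  have "(\<Sum>j\<in>S. d j * ((t j - r1) * (t j - r2))) = d k * ((t k - r1) * (t k - r2)) + (\<Sum>j\<in>S - {k}. d j * ((t j - r1) * (t j - r2)))"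
    using sum.remove[OF fin k] by blast
  also have "(\<Sum>j\<in>S - {k}. d j * ((t j - r1) * (t j - r2))) = 0"
    using r(1) by (intro sum.neutral) auto
  finally show ?thesis using z r by simp
qed


lemma lift_iff:
  assumes "S \<subseteq> {1..n}"
  shows "(a, b, z) \<in> convex hull ((\<lambda>i. gamma3 (t i)) ` S) \<longleftrightarrow>
    (\<exists>l. (\<forall>k\<in>S. 0 \<le> l k) \<and> sum l S = 1 \<and> (\<Sum>k\<in>S. l k * t k) = a \<and> (\<Sum>k\<in>S. l k * (t k)^2) = b \<and> (\<Sum>k\<in>S. l k * (t k)^3) = z)"
proof -
  have fin: "finite S" using assms finite_subset by blast
  have "(a, b, z) \<in> convex hull ((\<lambda>i. gamma3 (t i)) ` S) \<longleftrightarrow> (\<exists>l. (\<forall>k\<in>S. 0 \<le> l k) \<and> sum l S = 1 \<and> (\<Sum>k\<in>S. l k *\<^sub>R gamma3 (t k)) = (a, b, z))"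
    using hull_image_iff[OF fin inj_g3[OF assms]] by simp
  then show ?thesis unfolding sum_pair3 by auto
qed

lemma rep_unique:
  assumes S: "S \<subseteq> {1..n}" "card S \<le> 3" and l: "rep t S l p" and m: "rep t S m p" and k: "k \<in> S"
  shows "l k = m k"
proof -
  have "l k - m k = 0"
  proof (rule mom_zero[OF S _ _ _ k])
    show "(\<Sum>k\<in>S. l k - m k) = 0" using l m by (simp add: rep_def sum_subtractf)
    show "(\<Sum>k\<in>S. (l k - m k) * t k) = 0" using l m by (simp add: rep_def sum_subtractf left_diff_distrib)
    show "(\<Sum>k\<in>S. (l k - m k) * (t k)^2) = 0" using l m by (simp add: rep_def sum_subtractf left_diff_distrib)
  qed
  then show ?thesis by simp
qed

lemma height_rep:
  assumes S: "S \<subseteq> {1..n}" "card S \<le> 3" and l: "rep t S l p"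
  shows "height t S p = (\<Sum>k\<in>S. l k * (t k)^3)"
  unfolding height_def
proof (rule the_equality)
  show "(fst p, snd p, \<Sum>k\<in>S. l k * t k ^ 3) \<in> convex hull (\<lambda>i. gamma3 (t i)) ` S"
    unfolding lift_iff[OF S(1)] using l unfolding rep_def by blast
next
  fix z assume "(fst p, snd p, z) \<in> convex hull (\<lambda>i. gamma3 (t i)) ` S"
  then obtain m where m: "\<forall>k\<in>S. 0 \<le> m k" "sum m S = 1" "(\<Sum>k\<in>S. m k * t k) = fst p"
     "(\<Sum>k\<in>S. m k * (t k)^2) = snd p" "(\<Sum>k\<in>S. m k * (t k)^3) = z"
    unfolding lift_iff[OF S(1)] by blast
  have "rep t S m p" using m unfolding rep_def by blast
  then have "\<And>k. k \<in> S \<Longrightarrow> m k = l k" using rep_unique[OF S _ l] by metis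
  then show "z = (\<Sum>k\<in>S. l k * t k ^ 3)" using m(5) by (metis (no_types, lifting) sum.cong)
qed

lemma rep_cubic:
  assumes "rep t S l p"
  shows "(\<Sum>k\<in>S. l k * (t k)^3) = (\<Sum>k\<in>S. l k * ((t k - x) * (t k - y) * (t k - z)))
     + (x+y+z) * snd p - (x*y+y*z+z*x) * fst p + x*y*z"
  using cubic_id[where S=S and l=l and s=t and x=x and y=y and z=z] assms unfolding rep_def by simp

lemma hsep:
  assumes tau: "\<tau> \<subseteq> {1..n}" "card \<tau> \<le> 3" and rho: "\<rho> \<subseteq> {1..n}" "card \<rho> \<le> 3"
    and p: "p \<in> cnv t \<tau>" "p \<in> cnv t \<rho>"
    and P1: "\<forall>k\<in>\<tau>. (t k - x) * (t k - y) * (t k - z) \<le> 0"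
    and P2: "\<forall>k\<in>\<rho>. (t k - x) * (t k - y) * (t k - z) \<ge> 0"
  shows "height t \<tau> p \<le> height t \<rho> p"
proof -
  obtain l where l: "rep t \<tau> l p" using p(1) cnv_iff[OF tau(1)] by blast
  obtain m where m: "rep t \<rho> m p" using p(2) cnv_iff[OF rho(1)] by blast
  have a: "(\<Sum>k\<in>\<tau>. l k * ((t k - x) * (t k - y) * (t k - z))) \<le> 0"
    using l P1 unfolding rep_def by (intro sum_nonpos) (simp add: mult_nonneg_nonpos)
  have b: "(\<Sum>k\<in>\<rho>. m k * ((t k - x) * (t k - y) * (t k - z))) \<ge> 0"
    using m P2 unfolding rep_def by (intro sum_nonneg) simp
  show ?thesis
    unfolding height_rep[OF tau l] height_rep[OF rho m] rep_cubic[OF l, of x y z] rep_cubic[OF m, of x y z]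
    using a b by linarith
qed


lemma rep_pair:
  assumes "u \<in> {1..n}" "v \<in> {1..n}" "u < v" "t u \<le> fst p" "fst p \<le> t v"
    and "snd p = (t u + t v) * fst p - t u * t v"
  shows "p \<in> cnv t {u, v}"
proof -
  have tuv: "t u < t v" using tless assms by simp
  define l where "l = (\<lambda>k. if k = u then (t v - fst p) / (t v - t u) else (fst p - t u) / (t v - t u))"
  have "rep t {u, v} l p"
    unfolding rep_def using assms tuv pair_alg[OF tuv, of "fst p"]
    by (auto simp: l_def divide_nonneg_pos)
  then show ?thesis using cnv_iff[of "{u,v}"] assms by auto
qed

lemma chord_pt:
  assumes uv: "u \<in> {1..n}" "v \<in> {1..n}" "u < v" and S: "S \<subseteq> {1..n}" and l: "rep t S l p"
    and q: "qf (t u) (t v) p = 0"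
  shows "p \<in> cnv t {u, v}" "t u \<le> fst p" "fst p \<le> t v"
proof -
  have tuv: "t u < t v" using tless uv by simp
  have s: "snd p = (t u + t v) * fst p - t u * t v" using q unfolding qf_def by simp
  have n1: "0 \<le> (\<Sum>k\<in>S. l k * (t k - t u)^2)" using l unfolding rep_def by (intro sum_nonneg) auto
  have n2: "0 \<le> (\<Sum>k\<in>S. l k * (t k - t v)^2)" using l unfolding rep_def by (intro sum_nonneg) auto
  have "0 \<le> (t v - t u) * (fst p - t u)" using n1 unfolding sq_rep[OF l] s by (simp add: algebra_simps power2_eq_square)
  then show a: "t u \<le> fst p" using tuv by (simp add: zero_le_mult_iff)
  have "0 \<le> (t v - t u) * (t v - fst p)" using n2 unfolding sq_rep[OF l] s by (simp add: algebra_simps power2_eq_square)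
  then show b: "fst p \<le> t v" using tuv by (simp add: zero_le_mult_iff)
  show "p \<in> cnv t {u, v}" by (rule rep_pair[OF uv a b s])
qed

lemma cnv_mono: "A \<subseteq> B \<Longrightarrow> cnv t A \<subseteq> cnv t B"
  unfolding cnv_def by (intro hull_mono image_mono)

lemma convex_cnv: "convex (cnv t A)"
  unfolding cnv_def by (rule convex_convex_hull)

lemma qf_le: assumes "u \<in> {1..n}" "v \<in> {1..n}" "u < v" "A \<subseteq> {1..n}" "\<forall>k\<in>A. u \<le> k \<and> k \<le> v" "p \<in> cnv t A"
  shows "qf (t u) (t v) p \<le> 0"
proof -
  obtain l where l: "rep t A l p" using assms cnv_iff by blast
  have "\<forall>k\<in>A. (t k - t u) * (t k - t v) \<le> 0"
  proof
    fix k assume k: "k \<in> A"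
    then have kn: "k \<in> {1..n}" using assms(4) by auto
    have "t u \<le> t k" using tle[OF assms(1) kn] assms(5) k by auto
    moreover have "t k \<le> t v" using tle[OF kn assms(2)] assms(5) k by auto
    ultimately show "(t k - t u) * (t k - t v) \<le> 0" by (simp add: mult_nonneg_nonpos)
  qed
  then show ?thesis unfolding qf_rep[OF l] using l unfolding rep_def
    by (intro sum_nonpos) (simp add: mult_nonneg_nonpos)
qed

lemma qf_ge: assumes "u \<in> {1..n}" "v \<in> {1..n}" "u < v" "A \<subseteq> {1..n}" "\<forall>k\<in>A. k \<le> u \<or> v \<le> k" "p \<in> cnv t A"
  shows "qf (t u) (t v) p \<ge> 0"
proof -
  obtain l where l: "rep t A l p" using assms cnv_iff by blast
  have "\<forall>k\<in>A. (t k - t u) * (t k - t v) \<ge> 0"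
  proof
    fix k assume k: "k \<in> A"
    then have kn: "k \<in> {1..n}" using assms(4) by auto
    have tuv: "t u < t v" using tless assms by simp
    show "(t k - t u) * (t k - t v) \<ge> 0"
    proof (cases "k \<le> u")
      case True
      then have "t k \<le> t u" using tle[OF kn assms(1)] by simp
      then show ?thesis using tuv by (simp add: mult_nonpos_nonpos)
    next
      case False
      then have "v \<le> k" using assms(5) k by auto
      then have "t v \<le> t k" using tle[OF assms(2) kn] by simp
      then show ?thesis using tuv by simp
    qed
  qed
  then show ?thesis unfolding qf_rep[OF l] using l unfolding rep_def
    by (intro sum_nonneg) simp
qed


lemma glue:
  assumes V: "V \<subseteq> {1..n}" "u \<in> V" "v \<in> V" "u < v"
  shows "cnv t V \<subseteq> cnv t {k\<in>V. u \<le> k \<and> k \<le> v} \<union> cnv t {k\<in>V. k \<le> u \<or> v \<le> k}"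
proof
  fix p assume p: "p \<in> cnv t V"
  define A where "A = {k\<in>V. u \<le> k \<and> k \<le> v}"
  define B where "B = {k\<in>V. k \<le> u \<or> v \<le> k}"
  have un: "V = A \<union> B" unfolding A_def B_def by auto
  have AV: "A \<subseteq> {1..n}" "B \<subseteq> {1..n}" using V unfolding A_def B_def by auto
  have uvn: "u \<in> {1..n}" "v \<in> {1..n}" using V by auto
  have uvAB: "{u, v} \<subseteq> A" "{u, v} \<subseteq> B" using V unfolding A_def B_def by auto
  have "cnv t V = convex hull (cnv t A \<union> cnv t B)"
    unfolding cnv_def un image_Un by (rule hull_Un) (simp add: convex_Inter)
  also have "\<dots> = {a *\<^sub>R y + b *\<^sub>R x | a b y x. a \<ge> 0 \<and> b \<ge> 0 \<and> a + b = 1 \<and> y \<in> cnv t A \<and> x \<in> cnv t B}"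
    by (rule convex_hull_union_two) (use uvAB in \<open>auto simp: convex_cnv cnv_def intro!: hull_inc\<close>)
  finally obtain a b y x where ab: "a \<ge> 0" "b \<ge> 0" "a + b = 1" and y: "y \<in> cnv t A" and x: "x \<in> cnv t B"
    and pe: "p = a *\<^sub>R y + b *\<^sub>R x" using p by blast
  let ?f = "qf (t u) (t v)"
  have "\<forall>k\<in>A. u \<le> k \<and> k \<le> v" unfolding A_def by simp
  then have fy: "?f y \<le> 0" using qf_le[OF uvn V(4) AV(1) _ y] by blast
  have "\<forall>k\<in>B. k \<le> u \<or> v \<le> k" unfolding B_def by simp
  then have fx: "?f x \<ge> 0" using qf_ge[OF uvn V(4) AV(2) _ x] by blast
  have AVs: "cnv t A \<subseteq> cnv t V" "cnv t B \<subseteq> cnv t V"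
    by (rule cnv_mono, simp add: A_def B_def)+
  have zero: "z \<in> cnv t A \<and> z \<in> cnv t B" if "z \<in> cnv t V" "?f z = 0" for z
  proof -
    have "\<exists>l. rep t V l z" using cnv_iff[OF V(1)] that(1) by simp
    then obtain l where l: "rep t V l z" by blast
    have zz: "z \<in> cnv t {u, v}" by (rule chord_pt(1)[OF uvn V(4) V(1) l that(2)])
    show ?thesis using subsetD[OF cnv_mono[OF uvAB(1)] zz] subsetD[OF cnv_mono[OF uvAB(2)] zz] by simp
  qed
  have yV: "y \<in> cnv t V" and xV: "x \<in> cnv t V" using AVs x y by auto
  show "p \<in> cnv t A \<union> cnv t B"
  proof (cases "?f p \<le> 0")
    case True
    show ?thesis
    proof (cases "?f x = 0")
      case True
      then have "x \<in> cnv t A" using zero xV by blast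
      then have "p \<in> cnv t A" unfolding pe using convexD[OF convex_cnv y _ ab] by blast
      then show ?thesis by blast
    next
      case False
      then have fx': "?f x > 0" using fx by simp
      have "p \<in> cnv t A" unfolding pe
      proof (rule cross_conv[OF qf_aff convex_cnv y fy fx' ab])
        show "?f (a *\<^sub>R y + b *\<^sub>R x) \<le> 0" using True pe by simp
        fix \<theta> :: real assume th: "0 \<le> \<theta>" "\<theta> \<le> 1" "?f (\<theta> *\<^sub>R x + (1 - \<theta>) *\<^sub>R y) = 0"
        have "\<theta> *\<^sub>R x + (1 - \<theta>) *\<^sub>R y \<in> cnv t V" using convexD[OF convex_cnv xV yV, of \<theta> "1-\<theta>"] th by simp
        then show "\<theta> *\<^sub>R x + (1 - \<theta>) *\<^sub>R y \<in> cnv t A" using zero th(3) by blast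
      qed
      then show ?thesis by blast
    qed
  next
    case False
    show ?thesis
    proof (cases "?f y = 0")
      case True
      then have "y \<in> cnv t B" using zero yV by blast
      then have "p \<in> cnv t B" unfolding pe using convexD[OF convex_cnv _ x ab] by blast
      then show ?thesis by blast
    next
      case False': False
      have aff: "\<And>a' b' x y. a' + b' = 1 \<Longrightarrow> - ?f (a' *\<^sub>R x + b' *\<^sub>R y) = a' * (- ?f x) + b' * (- ?f y)"
        using qf_aff by (simp add: algebra_simps)
      have fy': "- ?f y > 0" using fy False' by simp
      have "b *\<^sub>R x + a *\<^sub>R y \<in> cnv t B"
      proof (rule cross_conv[where f="\<lambda>z. - ?f z", OF aff convex_cnv x _ fy' ab(2,1)])
        show "- ?f x \<le> 0" using fx by simp
        show "b + a = 1" using ab by simp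
        show "- ?f (b *\<^sub>R x + a *\<^sub>R y) \<le> 0" using False pe by (simp add: add.commute)
        fix \<theta> :: real assume th: "0 \<le> \<theta>" "\<theta> \<le> 1" "- ?f (\<theta> *\<^sub>R y + (1 - \<theta>) *\<^sub>R x) = 0"
        have "\<theta> *\<^sub>R y + (1 - \<theta>) *\<^sub>R x \<in> cnv t V" using convexD[OF convex_cnv yV xV, of \<theta> "1-\<theta>"] th by simp
        then show "\<theta> *\<^sub>R y + (1 - \<theta>) *\<^sub>R x \<in> cnv t B" using zero th(3) by simp
      qed
      then show ?thesis unfolding pe by (simp add: add.commute)
    qed
  qed
qed


lemma fan_cover:
  assumes "1 \<le> u" "u < v" "v < m" "m \<le> n"
  shows "cnv t ({u..v} \<union> {m}) \<subseteq> \<Union> (cnv t ` fan u v m)"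
  using assms
proof (induction "v - u" arbitrary: u)
  case 0
  then show ?case by simp
next
  case (Suc d)
  show ?case
  proof (cases "v = Suc u")
    case True
    then have "{u..v} \<union> {m} = {u, Suc u, m}" by auto
    moreover have "{u, Suc u, m} \<in> fan u v m" unfolding fan_def using True by auto
    ultimately show ?thesis by auto
  next
    case False
    let ?V = "{u..v} \<union> {m}"
    have g: "cnv t ?V \<subseteq> cnv t {k\<in>?V. Suc u \<le> k \<and> k \<le> m} \<union> cnv t {k\<in>?V. k \<le> Suc u \<or> m \<le> k}"
      by (rule glue) (use Suc.prems False in auto)
    have e1: "{k\<in>?V. Suc u \<le> k \<and> k \<le> m} = {Suc u..v} \<union> {m}" using Suc.prems by auto
    have e2: "{k\<in>?V. k \<le> Suc u \<or> m \<le> k} = {u, Suc u, m}" using Suc.prems False by auto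
    have ih: "cnv t ({Suc u..v} \<union> {m}) \<subseteq> \<Union> (cnv t ` fan (Suc u) v m)"
      using Suc.hyps(1)[of "Suc u"] Suc.hyps(2) Suc.prems False by auto
    have sub: "fan (Suc u) v m \<subseteq> fan u v m" unfolding fan_def by auto
    have mem: "{u, Suc u, m} \<in> fan u v m" unfolding fan_def using Suc.prems False by auto
    show ?thesis using g ih sub mem unfolding e1 e2 by blast
  qed
qed


lemma Tr_cover:
  assumes abc: "1 \<le> a" "a < b" "b < c" "c \<le> n"
  shows "cnv t {1..n} \<subseteq> \<Union> (cnv t ` Tr n a b c)"
proof -
  let ?U = "\<Union> (cnv t ` Tr n a b c)"
  have sub: "cnv t X \<subseteq> ?U" if "X \<subseteq> \<rho>" "\<rho> \<in> Tr n a b c" for X \<rho>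
    using cnv_mono[OF that(1)] that(2) by blast
  have fsub: "\<Union> (cnv t ` F) \<subseteq> ?U" if "F \<subseteq> Tr n a b c" for F using that by blast
  have sig: "{a,b,c} \<in> Tr n a b c" unfolding Tr_def by simp
  have acn: "c < n \<Longrightarrow> {a,c,n} \<in> Tr n a b c" unfolding Tr_def by simp
  have P1: "cnv t X \<subseteq> ?U" if "X \<subseteq> {a..b}" for X
  proof (cases "b = Suc a")
    case True
    then have "X \<subseteq> {a,b,c}" using that by auto
    then show ?thesis using sub sig by blast
  next
    case False
    have "cnv t X \<subseteq> cnv t ({a..b-1} \<union> {b})" by (rule cnv_mono) (use that in \<open>auto simp: subset_iff\<close>)
    also have "\<dots> \<subseteq> \<Union> (cnv t ` fan a (b-1) b)" by (rule fan_cover) (use abc False in auto)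
    also have "\<dots> \<subseteq> ?U" by (rule fsub) (auto simp: Tr_def)
    finally show ?thesis .
  qed
  have P2: "cnv t X \<subseteq> ?U" if "X \<subseteq> {b..c}" for X
  proof (cases "c = Suc b")
    case True
    then have "X \<subseteq> {a,b,c}" using that by auto
    then show ?thesis using sub sig by blast
  next
    case False
    have "cnv t X \<subseteq> cnv t ({b..c-1} \<union> {c})" by (rule cnv_mono) (use that in \<open>auto simp: subset_iff\<close>)
    also have "\<dots> \<subseteq> \<Union> (cnv t ` fan b (c-1) c)" by (rule fan_cover) (use abc False in auto)
    also have "\<dots> \<subseteq> ?U" by (rule fsub) (auto simp: Tr_def)
    finally show ?thesis .
  qed
  have P5: "cnv t X \<subseteq> ?U" if "X \<subseteq> {1..a} \<union> {n}" for X
  proof (cases "a = 1")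
    case True
    then have X: "X \<subseteq> {a, c, n}" using that by auto
    show ?thesis
    proof (cases "c < n")
      case True
      then show ?thesis using sub[OF X acn] by blast
    next
      case False
      then have "X \<subseteq> {a,b,c}" using X abc by auto
      then show ?thesis using sub sig by blast
    qed
  next
    case False
    have "cnv t X \<subseteq> cnv t ({1..a} \<union> {n})" by (rule cnv_mono) (use that in \<open>auto simp: subset_iff\<close>)
    also have "\<dots> \<subseteq> \<Union> (cnv t ` fan 1 a n)" by (rule fan_cover) (use abc False in auto)
    also have "\<dots> \<subseteq> ?U" by (rule fsub) (auto simp: Tr_def)
    finally show ?thesis .
  qed
  have P6: "cnv t X \<subseteq> ?U" if "X \<subseteq> {c..n}" "c < n" for X
  proof (cases "c = n - 1")
    case True
    then have X: "X \<subseteq> {a, c, n}" using that by (auto simp: subset_iff)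
    then show ?thesis using sub[OF X acn[OF that(2)]] by blast
  next
    case False
    have "cnv t X \<subseteq> cnv t ({c..n-1} \<union> {n})" by (rule cnv_mono) (use that in \<open>auto simp: subset_iff\<close>)
    also have "\<dots> \<subseteq> \<Union> (cnv t ` fan c (n-1) n)" by (rule fan_cover) (use abc False that in auto)
    also have "\<dots> \<subseteq> ?U" by (rule fsub) (auto simp: Tr_def)
    finally show ?thesis .
  qed
  have P4: "cnv t X \<subseteq> ?U" if "X \<subseteq> {a} \<union> {c..n}" for X
  proof (cases "c < n")
    case False
    then have "X \<subseteq> {a,b,c}" using that abc by auto
    then show ?thesis using sub sig by blast
  next
    case True
    let ?W = "{a} \<union> {c..n}"
    have "cnv t X \<subseteq> cnv t ?W" by (rule cnv_mono) (use that in \<open>auto simp: subset_iff\<close>)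
    also have "\<dots> \<subseteq> cnv t {k\<in>?W. c \<le> k \<and> k \<le> n} \<union> cnv t {k\<in>?W. k \<le> c \<or> n \<le> k}"
      by (rule glue) (use abc True in auto)
    also have "\<dots> \<subseteq> ?U"
    proof -
      have "cnv t {k\<in>?W. c \<le> k \<and> k \<le> n} \<subseteq> ?U" by (rule P6) (use True in auto)
      moreover have "{k\<in>?W. k \<le> c \<or> n \<le> k} \<subseteq> {a,c,n}" by auto
      ultimately show ?thesis using sub acn[OF True] by blast
    qed
    finally show ?thesis .
  qed
  define W1 where "W1 = {k\<in>{1..n}. k \<le> a \<or> b \<le> k}"
  define W2 where "W2 = {k\<in>W1. k \<le> b \<or> c \<le> k}"
  define W3 where "W3 = {k\<in>W2. k \<le> a \<or> c \<le> k}"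
  have s1: "cnv t {1..n} \<subseteq> cnv t {k\<in>{1..n}. a \<le> k \<and> k \<le> b} \<union> cnv t W1"
    unfolding W1_def by (rule glue) (use abc in auto)
  have s2: "cnv t W1 \<subseteq> cnv t {k\<in>W1. b \<le> k \<and> k \<le> c} \<union> cnv t W2"
    unfolding W2_def by (rule glue) (use abc in \<open>auto simp: W1_def\<close>)
  have s3: "cnv t W2 \<subseteq> cnv t {k\<in>W2. a \<le> k \<and> k \<le> c} \<union> cnv t W3"
    unfolding W3_def by (rule glue) (use abc in \<open>auto simp: W1_def W2_def\<close>)
  have s4: "cnv t W3 \<subseteq> cnv t {k\<in>W3. a \<le> k \<and> k \<le> n} \<union> cnv t {k\<in>W3. k \<le> a \<or> n \<le> k}"
    by (rule glue) (use abc in \<open>auto simp: W1_def W2_def W3_def\<close>)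
  have h1: "cnv t {k\<in>{1..n}. a \<le> k \<and> k \<le> b} \<subseteq> ?U" by (rule P1) auto
  have h2: "cnv t {k\<in>W1. b \<le> k \<and> k \<le> c} \<subseteq> ?U" by (rule P2) auto
  have h3: "cnv t {k\<in>W2. a \<le> k \<and> k \<le> c} \<subseteq> ?U"
  proof -
    have "{k\<in>W2. a \<le> k \<and> k \<le> c} \<subseteq> {a,b,c}" unfolding W2_def W1_def by auto
    then show ?thesis using sub sig by blast
  qed
  have h4: "cnv t {k\<in>W3. a \<le> k \<and> k \<le> n} \<subseteq> ?U"
    by (rule P4) (auto simp: W1_def W2_def W3_def)
  have h5: "cnv t {k\<in>W3. k \<le> a \<or> n \<le> k} \<subseteq> ?U"
    by (rule P5) (auto simp: W1_def W2_def W3_def)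
  have "cnv t W3 \<subseteq> ?U" by (rule un3[OF s4 h4 h5])
  then have "cnv t W2 \<subseteq> ?U" by (rule un3[OF s3 h3])
  then have "cnv t W1 \<subseteq> ?U" by (rule un3[OF s2 h2])
  then show ?thesis by (rule un3[OF s1 h1])
qed


lemma supp_zero:
  assumes uv: "u \<in> {1..n}" "v \<in> {1..n}" "u < v" and R: "R \<subseteq> {1..n}" and l: "rep t R l p"
    and q: "qf (t u) (t v) p = 0"
    and side: "(\<forall>k\<in>R. k \<le> u \<or> v \<le> k) \<or> (\<forall>k\<in>R. u \<le> k \<and> k \<le> v)"
  shows "\<forall>k\<in>R - {u, v}. l k = 0"
proof -
  have fin: "finite R" using R finite_subset by blast
  have tuv: "t u < t v" using tless uv by simp
  have lnn: "\<And>k. k \<in> R \<Longrightarrow> l k \<ge> 0" using l unfolding rep_def by blast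
  define g where "g = (\<lambda>k. l k * ((t k - t u) * (t k - t v)))"
  have s0: "sum g R = 0" using qf_rep[OF l] q unfolding g_def by simp
  have qnz: "(t k - t u) * (t k - t v) \<noteq> 0" if "k \<in> R - {u,v}" for k
  proof -
    have kn: "k \<in> {1..n}" using that R by auto
    have "t k \<noteq> t u" "t k \<noteq> t v" using teq[OF kn uv(1)] teq[OF kn uv(2)] that by auto
    then show ?thesis by simp
  qed
  have gz: "\<forall>k\<in>R. g k = 0"
  proof (cases "\<forall>k\<in>R. k \<le> u \<or> v \<le> k")
    case True
    have nn: "\<forall>k\<in>R. g k \<ge> 0"
    proof
      fix k assume k: "k \<in> R"
      then have kn: "k \<in> {1..n}" using R by auto
      have "(t k - t u) * (t k - t v) \<ge> 0"
      proof (cases "k \<le> u")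
        case True
        then have "t k \<le> t u" using tle[OF kn uv(1)] by simp
        then have "t k - t u \<le> 0" "t k - t v \<le> 0" using tuv by auto
        then show ?thesis by (rule mult_nonpos_nonpos)
      next
        case False
        then have "v \<le> k" using True k by auto
        then have "t v \<le> t k" using tle[OF uv(2) kn] by simp
        then have "t k - t u \<ge> 0" "t k - t v \<ge> 0" using tuv by auto
        then show ?thesis by (rule mult_nonneg_nonneg)
      qed
      then show "g k \<ge> 0" unfolding g_def using lnn[OF k] by (rule mult_nonneg_nonneg[rotated])
    qed
    show ?thesis using sum_nonneg_eq_0_iff[OF fin, of g] nn s0 by blast
  next
    case False
    then have side2: "\<forall>k\<in>R. u \<le> k \<and> k \<le> v" using side by blast
    have nn: "\<forall>k\<in>R. - g k \<ge> 0"
    proof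
      fix k assume k: "k \<in> R"
      then have kn: "k \<in> {1..n}" using R by auto
      have "t u \<le> t k" "t k \<le> t v" using tle[OF uv(1) kn] tle[OF kn uv(2)] side2 k by auto
      then have "t k - t u \<ge> 0" "t k - t v \<le> 0" by auto
      then have "(t k - t u) * (t k - t v) \<le> 0" by (rule mult_nonneg_nonpos)
      then have "g k \<le> 0" unfolding g_def using lnn[OF k] by (rule mult_nonneg_nonpos[rotated])
      then show "- g k \<ge> 0" by simp
    qed
    have "sum (\<lambda>k. - g k) R = 0" using s0 by (simp add: sum_negf)
    then have "\<forall>k\<in>R. - g k = 0" using sum_nonneg_eq_0_iff[OF fin, of "\<lambda>k. - g k"] nn by blast
    then show ?thesis by simp
  qed
  show ?thesis
  proof
    fix k assume k: "k \<in> R - {u, v}"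
    then have "l k * ((t k - t u) * (t k - t v)) = 0" using gz unfolding g_def by blast
    then show "l k = 0" using qnz[OF k] by simp
  qed
qed

lemma nonov:
  assumes uv: "u \<in> {1..n}" "v \<in> {1..n}" "u < v" and R: "R \<subseteq> {1..n}" "R' \<subseteq> {1..n}"
    and s1: "\<forall>k\<in>R. k \<le> u \<or> v \<le> k" and s2: "\<forall>k\<in>R'. u \<le> k \<and> k \<le> v"
  shows "\<not> overlap t R R' \<and> \<not> overlap t R' R"
proof -
  have main: "cnv t R \<inter> cnv t R' \<subseteq> cnv t (R \<inter> R')"
  proof
    fix p assume p: "p \<in> cnv t R \<inter> cnv t R'"
    obtain l where l: "rep t R l p" using p cnv_iff[OF R(1)] by blast
    obtain m where m: "rep t R' m p" using p cnv_iff[OF R(2)] by blast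
    have "qf (t u) (t v) p \<ge> 0" using qf_ge[OF uv R(1) s1] p by blast
    moreover have "qf (t u) (t v) p \<le> 0" using qf_le[OF uv R(2) s2] p by blast
    ultimately have q: "qf (t u) (t v) p = 0" by simp
    have fR: "finite R" "finite R'" using R finite_subset by auto
    have zl: "\<forall>k\<in>R - {u, v}. l k = 0" using supp_zero[OF uv R(1) l q] s1 by blast
    have zm: "\<forall>k\<in>R' - {u, v}. m k = 0" using supp_zero[OF uv R(2) m q] s2 by blast
    have l1: "rep t (R \<inter> {u,v}) l p" by (rule rep_sub[OF l _ fR(1)]) (use zl in auto)
    have m1: "rep t (R' \<inter> {u,v}) m p" by (rule rep_sub[OF m _ fR(2)]) (use zm in auto)
    let ?l = "\<lambda>k. if k \<in> R \<inter> {u,v} then l k else 0"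
    let ?m = "\<lambda>k. if k \<in> R' \<inter> {u,v} then m k else 0"
    have l2: "rep t {u,v} ?l p" by (rule rep_super[OF l1]) auto
    have m2: "rep t {u,v} ?m p" by (rule rep_super[OF m1]) auto
    have uvn: "{u,v} \<subseteq> {1..n}" "card {u,v} \<le> 3" using uv by auto
    have eq: "?l k = ?m k" if "k \<in> {u,v}" for k by (rule rep_unique[OF uvn l2 m2 that])
    have "rep t (R \<inter> R') l p"
    proof (rule rep_sub[OF l _ fR(1)])
      show "R \<inter> R' \<subseteq> R" by blast
      show "\<forall>k\<in>R - R \<inter> R'. l k = 0"
      proof
        fix k assume k: "k \<in> R - R \<inter> R'"
        show "l k = 0"
        proof (cases "k \<in> {u,v}")
          case True
          then have "?l k = ?m k" using eq by blast
          then show ?thesis using k True by auto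
        next
          case False
          then show ?thesis using zl k by auto
        qed
      qed
    qed
    moreover have "R \<inter> R' \<subseteq> {1..n}" using R by auto
    ultimately show "p \<in> cnv t (R \<inter> R')" using cnv_iff[of "R \<inter> R'" p] by blast
  qed
  show ?thesis using not_overlap_I[OF main] overlap_sym[of t R R'] by blast
qed

end



lemma Tr_mem: "R \<in> Tr n a b c \<longleftrightarrow> R = {a,b,c} \<or> R \<in> fan a (b-1) b \<or> R \<in> fan b (c-1) c \<or> R \<in> fan 1 a n
   \<or> (c < n \<and> R = {a,c,n}) \<or> R \<in> fan c (n-1) n"
  unfolding Tr_def by simp

lemma SEP_sym_or: "SEP n R R' \<or> SEP n R' R \<Longrightarrow> SEP n R' R \<or> SEP n R R'" by blast

lemma Tr_sep:
  assumes abc: "1 \<le> a" "a < b" "b < c" "c \<le> n" and R: "R \<in> Tr n a b c" "R' \<in> Tr n a b c" "R \<noteq> R'"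
  shows "SEP n R R' \<or> SEP n R' R"
proof -
  define Inn where "Inn = (\<lambda>X. X = {a,b,c} \<or> X \<in> fan a (b-1) b \<or> X \<in> fan b (c-1) c)"
  define Out where "Out = (\<lambda>X. X \<in> fan 1 a n \<or> (c < n \<and> X = {a,c,n}) \<or> X \<in> fan c (n-1) n)"
  have IO: "\<And>X. X \<in> Tr n a b c \<Longrightarrow> Inn X \<or> Out X" unfolding Inn_def Out_def Tr_mem by blast
  have inac: "\<forall>k\<in>X. a \<le> k \<and> k \<le> c" if "Inn X" for X
    using that abc unfolding Inn_def fan_mem by auto
  have outac: "\<forall>k\<in>X. k \<le> a \<or> c \<le> k" if "Out X" for X
    using that abc unfolding Out_def fan_mem by auto
  have mixed: "SEP n X Y" if "Out X" "Inn Y" for X Y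
    by (rule SEP_I[of a c]) (use abc outac[OF that(1)] inac[OF that(2)] in auto)
  have II: "SEP n X Y \<or> SEP n Y X" if "Inn X" "Inn Y" "X \<noteq> Y" for X Y
  proof -
    have ab_in: "\<forall>k\<in>Z. a \<le> k \<and> k \<le> b" if "Z \<in> fan a (b-1) b" for Z using that abc unfolding fan_mem by auto
    have ab_out: "\<forall>k\<in>Z. k \<le> a \<or> b \<le> k" if "Z = {a,b,c} \<or> Z \<in> fan b (c-1) c" for Z using that abc unfolding fan_mem by auto
    have bc_in: "\<forall>k\<in>Z. b \<le> k \<and> k \<le> c" if "Z \<in> fan b (c-1) c" for Z using that abc unfolding fan_mem by auto
    have bc_out: "\<forall>k\<in>Z. k \<le> b \<or> c \<le> k" if "Z = {a,b,c}" for Z using that abc by auto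
    have s1: "SEP n Z W" if "Z = {a,b,c} \<or> Z \<in> fan b (c-1) c" "W \<in> fan a (b-1) b" for Z W
      by (rule SEP_I[of a b]) (use abc ab_out[OF that(1)] ab_in[OF that(2)] in auto)
    have s2: "SEP n Z W" if "Z = {a,b,c}" "W \<in> fan b (c-1) c" for Z W
      by (rule SEP_I[of b c]) (use abc bc_out[OF that(1)] bc_in[OF that(2)] in auto)
    have f1: "SEP n Z W \<or> SEP n W Z" if "Z \<in> fan a (b-1) b" "W \<in> fan a (b-1) b" "Z \<noteq> W" for Z W
      by (rule sep_fan_fan[OF that]) (use abc in auto)
    have f2: "SEP n Z W \<or> SEP n W Z" if "Z \<in> fan b (c-1) c" "W \<in> fan b (c-1) c" "Z \<noteq> W" for Z W
      by (rule sep_fan_fan[OF that]) (use abc in auto)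
    have X3: "X = {a,b,c} \<or> X \<in> fan a (b-1) b \<or> X \<in> fan b (c-1) c" using that(1) unfolding Inn_def .
    have Y3: "Y = {a,b,c} \<or> Y \<in> fan a (b-1) b \<or> Y \<in> fan b (c-1) c" using that(2) unfolding Inn_def .
    show ?thesis using X3 Y3 that(3)
      by (elim disjE) (simp_all add: s1 s2 f1 f2)
  qed
  have OO: "SEP n X Y \<or> SEP n Y X" if "Out X" "Out Y" "X \<noteq> Y" for X Y
  proof -
    have f3: "SEP n Z W \<or> SEP n W Z" if "Z \<in> fan 1 a n" "W \<in> fan 1 a n" "Z \<noteq> W" for Z W
      by (rule sep_fan_fan[OF that]) (use abc in auto)
    have f5: "SEP n Z W \<or> SEP n W Z" if "Z \<in> fan c (n-1) n" "W \<in> fan c (n-1) n" "Z \<noteq> W" for Z W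
      by (rule sep_fan_fan[OF that]) (use abc in auto)
    have s34: "SEP n Z W" if h: "Z \<in> fan 1 a n" "W = {a,c,n}" for Z W
    proof -
      obtain i where i: "Z = {i, Suc i, n}" "1 \<le> i" "Suc i \<le> a" using h(1) fan_mem by blast
      show ?thesis unfolding i(1) h(2) by (rule SEP_I[of "Suc i" n]) (use abc i(2,3) in simp_all)
    qed
    have s35: "SEP n Z W" if h: "Z \<in> fan 1 a n" "W \<in> fan c (n-1) n" for Z W
    proof -
      obtain i where i: "Z = {i, Suc i, n}" "1 \<le> i" "Suc i \<le> a" using h(1) fan_mem by blast
      obtain j where j: "W = {j, Suc j, n}" "c \<le> j" "Suc j \<le> n - 1" using h(2) fan_mem by blast
      show ?thesis unfolding i(1) j(1) by (rule SEP_I[of "Suc i" n]) (use abc i(2,3) j(2,3) in auto)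
    qed
    have s45: "SEP n Z W" if h: "Z = {a,c,n}" "c < n" "W \<in> fan c (n-1) n" for Z W
    proof -
      obtain i where i: "W = {i, Suc i, n}" "c \<le> i" "Suc i \<le> n - 1" using h(3) fan_mem by blast
      show ?thesis unfolding i(1) h(1) by (rule SEP_I[of c n]) (use abc i(2,3) h(2) in auto)
    qed
    have X3: "X \<in> fan 1 a n \<or> (c < n \<and> X = {a,c,n}) \<or> X \<in> fan c (n-1) n" using that(1) unfolding Out_def .
    have Y3: "Y \<in> fan 1 a n \<or> (c < n \<and> Y = {a,c,n}) \<or> Y \<in> fan c (n-1) n" using that(2) unfolding Out_def .
    show ?thesis using X3 Y3 that(3)
      by (elim disjE conjE) (simp_all add: f3 f5 s34 s35 s45)
  qed
  show ?thesis
  proof (cases "Inn R")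
    case True
    show ?thesis
    proof (cases "Inn R'")
      case True
      then show ?thesis using II \<open>Inn R\<close> R(3) by blast
    next
      case False
      then have "Out R'" using IO[OF R(2)] by blast
      then show ?thesis using mixed \<open>Inn R\<close> by blast
    qed
  next
    case False
    then have oR: "Out R" using IO[OF R(1)] by blast
    show ?thesis
    proof (cases "Inn R'")
      case True
      then show ?thesis using mixed oR by blast
    next
      case False
      then have "Out R'" using IO[OF R(2)] by blast
      then show ?thesis using OO oR R(3) by blast
    qed
  qed
qed



lemma fan_prop: "R \<in> fan u v m \<Longrightarrow> 1 \<le> u \<Longrightarrow> v < m \<Longrightarrow> m \<le> n \<Longrightarrow> R \<subseteq> {1..n} \<and> card R = 3"
  unfolding fan_mem by auto

lemma Tr_prop:
  assumes abc: "1 \<le> a" "a < b" "b < c" "c \<le> n" and R: "R \<in> Tr n a b c"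
  shows "R \<subseteq> {1..n} \<and> card R = 3"
proof -
  have "R = {a,b,c} \<or> R \<in> fan a (b-1) b \<or> R \<in> fan b (c-1) c \<or> R \<in> fan 1 a n
   \<or> (c < n \<and> R = {a,c,n}) \<or> R \<in> fan c (n-1) n" using R unfolding Tr_mem .
  then show ?thesis
  proof (elim disjE conjE)
    assume "R = {a,b,c}" then show ?thesis using abc by auto
  next
    assume "R \<in> fan a (b-1) b" then show ?thesis using fan_prop[of R a "b-1" b n] abc by auto
  next
    assume "R \<in> fan b (c-1) c" then show ?thesis using fan_prop[of R b "c-1" c n] abc by auto
  next
    assume "R \<in> fan 1 a n" then show ?thesis using fan_prop[of R 1 a n n] abc by auto
  next
    assume "c < n" "R = {a,c,n}" then show ?thesis using abc by auto
  next
    assume "R \<in> fan c (n-1) n" then show ?thesis using fan_prop[of R c "n-1" n n] abc by auto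
  qed
qed

context fixes n :: nat and t :: "nat \<Rightarrow> real" assumes mono: "strict_mono_on {1..n} t"
begin

lemma SEP_nonov:
  assumes "SEP n R R'" "R \<subseteq> {1..n}" "R' \<subseteq> {1..n}"
  shows "\<not> overlap t R R' \<and> \<not> overlap t R' R"
proof -
  obtain u v where uv: "1 \<le> u" "v \<le> n" "u < v" "\<forall>k\<in>R. k \<le> u \<or> v \<le> k" "\<forall>k\<in>R'. u \<le> k \<and> k \<le> v"
    using assms(1) unfolding SEP_def by blast
  show ?thesis by (rule nonov[OF mono]) (use uv assms in auto)
qed

lemma Tr_triang:
  assumes abc: "1 \<le> a" "a < b" "b < c" "c \<le> n"
  shows "triangulation n t (Tr n a b c)"
  unfolding triangulation_def
proof (intro conjI)
  show "\<forall>\<rho>\<in>Tr n a b c. \<rho> \<subseteq> {1..n} \<and> card \<rho> = 3" using Tr_prop[OF abc] by blast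
next
  show "\<forall>\<rho>\<in>Tr n a b c. \<forall>\<rho>'\<in>Tr n a b c. \<rho> \<noteq> \<rho>' \<longrightarrow> \<not> overlap t \<rho> \<rho>'"
  proof (intro ballI impI)
    fix R R' assume R: "R \<in> Tr n a b c" "R' \<in> Tr n a b c" "R \<noteq> R'"
    have sub: "R \<subseteq> {1..n}" "R' \<subseteq> {1..n}" using Tr_prop[OF abc] R by auto
    show "\<not> overlap t R R'"
      using Tr_sep[OF abc R] SEP_nonov[OF _ sub] SEP_nonov[OF _ sub(2,1)] by blast
  qed
next
  show "(\<Union>\<rho>\<in>Tr n a b c. cnv t \<rho>) = cnv t {1..n}"
  proof
    show "(\<Union>\<rho>\<in>Tr n a b c. cnv t \<rho>) \<subseteq> cnv t {1..n}"
    proof (rule UN_least)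
      fix R assume "R \<in> Tr n a b c"
      then have "R \<subseteq> {1..n}" using Tr_prop[OF abc] by blast
      then show "cnv t R \<subseteq> cnv t {1..n}" by (rule cnv_mono[OF mono])
    qed
    show "cnv t {1..n} \<subseteq> (\<Union>\<rho>\<in>Tr n a b c. cnv t \<rho>)" by (rule Tr_cover[OF mono abc])
  qed
qed

end


lemma sum_ext:
  fixes f g :: "nat \<Rightarrow> real"
  shows "finite S' \<Longrightarrow> S \<subseteq> S' \<Longrightarrow> (\<Sum>k\<in>S'. (if k \<in> S then f k else 0) * g k) = (\<Sum>k\<in>S. f k * g k)"
proof -
  assume a: "finite S'" "S \<subseteq> S'"
  have "(\<Sum>k\<in>S'. (if k \<in> S then f k else 0) * g k) = (\<Sum>k\<in>S. (if k \<in> S then f k else 0) * g k)"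
    by (rule sum.mono_neutral_right) (use a in auto)
  also have "\<dots> = (\<Sum>k\<in>S. f k * g k)" by (rule sum.cong) auto
  finally show ?thesis .
qed

context fixes n :: nat and t :: "nat \<Rightarrow> real" assumes mono: "strict_mono_on {1..n} t"
begin

lemma cross:
  assumes sig: "\<sigma> \<subseteq> {1..n}" "card \<sigma> \<le> 3" and tau: "\<tau> \<subseteq> {1..n}" "card \<tau> \<le> 3"
    and mem: "a \<in> \<sigma>" "c \<in> \<sigma>" "b \<in> \<tau>" "d \<in> \<tau>" and ord: "a < b" "b < c" "c < d"
  shows "overlap t \<tau> \<sigma> \<and> \<not> below3 t \<tau> \<sigma>"
proof -
  have an: "a \<in> {1..n}" "b \<in> {1..n}" "c \<in> {1..n}" "d \<in> {1..n}" using sig tau mem by auto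
  define A where "A = t a"
  define B where "B = t b"
  define C where "C = t c"
  define D where "D = t d"
  have AB: "A < B" "B < C" "C < D" unfolding A_def B_def C_def D_def using tless[OF mono] an ord by auto
  define qb where "qb = (B - A) * (B - C)"
  define qd where "qd = (D - A) * (D - C)"
  have qb: "qb < 0" unfolding qb_def using AB by (simp add: mult_pos_neg)
  have qd: "qd > 0" unfolding qd_def using AB by simp
  define \<alpha> where "\<alpha> = qd / (qd - qb)"
  have al: "0 < \<alpha>" "\<alpha> < 1" unfolding \<alpha>_def using qb qd by (auto simp: field_simps)
  define x where "x = \<alpha> * B + (1 - \<alpha>) * D"
  define y where "y = \<alpha> * B^2 + (1 - \<alpha>) * D^2"
  define r where "r = (x, y)"
  define l where "l = (\<lambda>k::nat. if k = b then \<alpha> else 1 - \<alpha>)"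
  have bd: "b \<noteq> d" using ord by simp
  have lbd: "rep t {b, d} l r"
    unfolding rep_def r_def l_def x_def y_def B_def D_def using bd al by auto
  define lt where "lt = (\<lambda>k. if k \<in> {b, d} then l k else 0)"
  have fint: "finite \<tau>" using tau finite_subset by blast
  have lt: "rep t \<tau> lt r" unfolding lt_def by (rule rep_super[OF lbd]) (use mem fint in auto)
  have q0: "qf A C r = 0"
  proof -
    have "qf A C r = l b * ((t b - A) * (t b - C)) + l d * ((t d - A) * (t d - C))"
      using qf_rep[OF lbd, of A C] bd by simp
    also have "\<dots> = \<alpha> * qb + (1 - \<alpha>) * qd" unfolding l_def qb_def qd_def B_def D_def using bd by simp
    also have "\<dots> = 0" unfolding \<alpha>_def using qb qd by (simp add: field_simps)
    finally show ?thesis .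
  qed
  have sr: "snd r = (A + C) * fst r - A * C" using q0 unfolding qf_def by simp
  have xA: "A < x"
  proof -
    have "\<alpha> * A < \<alpha> * B" using al AB by simp
    moreover have "(1 - \<alpha>) * A < (1 - \<alpha>) * D" using al AB by simp
    moreover have "A = \<alpha> * A + (1 - \<alpha>) * A" by (simp add: algebra_simps)
    ultimately show ?thesis unfolding x_def by linarith
  qed
  have xC: "x < C"
  proof -
    have "(\<Sum>k\<in>{b,d}. l k * (t k - C)^2) = snd r - 2 * C * fst r + C^2" by (rule sq_rep[OF lbd])
    also have "\<dots> = (C - A) * (C - x)" unfolding sr by (simp add: r_def algebra_simps power2_eq_square)
    finally have e: "(\<Sum>k\<in>{b,d}. l k * (t k - C)^2) = (C - A) * (C - x)" .
    have "(\<Sum>k\<in>{b,d}. l k * (t k - C)^2) = \<alpha> * (B - C)^2 + (1 - \<alpha>) * (D - C)^2"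
      using bd unfolding l_def B_def D_def by simp
    moreover have "\<alpha> * (B - C)^2 > 0" using al AB by simp
    moreover have "(1 - \<alpha>) * (D - C)^2 \<ge> 0" using al by simp
    ultimately have "(C - A) * (C - x) > 0" using e by linarith
    then show ?thesis using AB by (simp add: zero_less_mult_iff)
  qed
  define m where "m = (\<lambda>k::nat. if k = a then (C - x) / (C - A) else (x - A) / (C - A))"
  have ac: "a \<noteq> c" "A < C" using ord AB by auto
  have mac: "rep t {a, c} m r"
    unfolding rep_def using ac pair_alg[OF ac(2), of x] sr xA xC
    by (auto simp: m_def r_def A_def C_def divide_nonneg_pos)
  define mt where "mt = (\<lambda>k. if k \<in> {a, c} then m k else 0)"
  have fins: "finite \<sigma>" using sig finite_subset by blast
  have mt: "rep t \<sigma> mt r" unfolding mt_def by (rule rep_super[OF mac]) (use mem fins in auto)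
  have rt: "r \<in> cnv t \<tau>" using cnv_iff[OF mono tau(1)] lt by blast
  have rs: "r \<in> cnv t \<sigma>" using cnv_iff[OF mono sig(1)] mt by blast
  define P where "P = (\<lambda>s::real. (s - A) * (s - C) * (s - D))"
  have h1: "height t \<tau> r = (\<Sum>k\<in>\<tau>. lt k * P (t k)) + (A+C+D) * snd r - (A*C+C*D+D*A) * fst r + A*C*D"
    unfolding height_rep[OF mono tau lt] rep_cubic[OF mono lt, of A C D] P_def ..
  have h2: "height t \<sigma> r = (\<Sum>k\<in>\<sigma>. mt k * P (t k)) + (A+C+D) * snd r - (A*C+C*D+D*A) * fst r + A*C*D"
    unfolding height_rep[OF mono sig mt] rep_cubic[OF mono mt, of A C D] P_def ..
  have s1: "(\<Sum>k\<in>\<tau>. lt k * P (t k)) = \<alpha> * P B"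
  proof -
    have "(\<Sum>k\<in>\<tau>. lt k * P (t k)) = (\<Sum>k\<in>{b,d}. l k * P (t k))"
      unfolding lt_def by (rule sum_ext) (use fint mem in auto)
    also have "\<dots> = \<alpha> * P B" using bd unfolding l_def P_def B_def D_def by simp
    finally show ?thesis .
  qed
  have s2: "(\<Sum>k\<in>\<sigma>. mt k * P (t k)) = 0"
  proof -
    have "(\<Sum>k\<in>\<sigma>. mt k * P (t k)) = (\<Sum>k\<in>{a,c}. m k * P (t k))"
      unfolding mt_def by (rule sum_ext) (use fins mem in auto)
    also have "\<dots> = 0" using ac unfolding P_def A_def C_def by simp
    finally show ?thesis .
  qed
  have PB: "P B > 0"
  proof -
    have "(B - A) * (B - C) < 0" using AB by (simp add: mult_pos_neg)
    moreover have "B - D < 0" using AB by simp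
    ultimately show ?thesis unfolding P_def by (simp add: mult_neg_neg)
  qed
  have hlt: "height t \<sigma> r < height t \<tau> r" unfolding h1 h2 s1 s2 using al PB by simp
  have nb: "\<not> below3 t \<tau> \<sigma>" unfolding below3_def using hlt rt rs by force
  have notin: "r \<notin> cnv t (\<tau> \<inter> \<sigma>)"
  proof
    assume "r \<in> cnv t (\<tau> \<inter> \<sigma>)"
    then obtain \<nu> where nu: "rep t (\<tau> \<inter> \<sigma>) \<nu> r" using cnv_iff[OF mono, of "\<tau> \<inter> \<sigma>"] tau by blast
    have nus: "rep t \<sigma> (\<lambda>k. if k \<in> \<tau> \<inter> \<sigma> then \<nu> k else 0) r" by (rule rep_super[OF nu]) (use fins in auto)
    have eqa: "(\<lambda>k. if k \<in> \<tau> \<inter> \<sigma> then \<nu> k else 0) a = mt a" by (rule rep_unique[OF mono sig nus mt mem(1)])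
    have eqc: "(\<lambda>k. if k \<in> \<tau> \<inter> \<sigma> then \<nu> k else 0) c = mt c" by (rule rep_unique[OF mono sig nus mt mem(2)])
    have "mt a > 0" unfolding mt_def m_def using xC ac by simp
    then have "a \<in> \<tau>" using eqa by (auto split: if_splits)
    have "mt c > 0" unfolding mt_def m_def using xA ac by simp
    then have "c \<in> \<tau>" using eqc by (auto split: if_splits)
    have "{a, b, c, d} \<subseteq> \<tau>" using \<open>a \<in> \<tau>\<close> \<open>c \<in> \<tau>\<close> mem by auto
    then have "card {a, b, c, d} \<le> card \<tau>" by (rule card_mono[OF fint])
    moreover have "card {a, b, c, d} = 4" using ord by auto
    ultimately show False using tau by simp
  qed
  have ov: "overlap t \<tau> \<sigma>"
    unfolding overlap_def
  proof
    show "cnv t (\<tau> \<inter> \<sigma>) \<subseteq> cnv t \<tau> \<inter> cnv t \<sigma>" using cnv_mono[OF mono] by (meson Int_greatest inf_le1 inf_le2)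
    show "cnv t (\<tau> \<inter> \<sigma>) \<noteq> cnv t \<tau> \<inter> cnv t \<sigma>" using notin rt rs by blast
  qed
  show ?thesis using ov nb by blast
qed

end


lemma p3a: "(a::real) \<le> 0 \<Longrightarrow> b \<le> 0 \<Longrightarrow> c \<le> 0 \<Longrightarrow> a * b * c \<le> 0"
  by (simp add: mult_nonneg_nonpos mult_nonpos_nonpos)
lemma p3b: "(a::real) \<ge> 0 \<Longrightarrow> b \<ge> 0 \<Longrightarrow> c \<le> 0 \<Longrightarrow> a * b * c \<le> 0"
  by (simp add: mult_nonneg_nonpos)
lemma p3c: "(a::real) \<ge> 0 \<Longrightarrow> b \<le> 0 \<Longrightarrow> c \<le> 0 \<Longrightarrow> a * b * c \<ge> 0"
  by (simp add: mult_nonneg_nonpos mult_nonpos_nonpos)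

context fixes n :: nat and t :: "nat \<Rightarrow> real" assumes mono: "strict_mono_on {1..n} t"
begin

lemma gsep:
  assumes xyz: "x \<in> {1..n}" "y \<in> {1..n}" "z \<in> {1..n}" "x < y" "y < z"
    and tau: "\<tau> \<subseteq> {1..n}" "card \<tau> \<le> 3"
    and cond: "(\<forall>k\<in>\<tau>. \<not> (x < k \<and> k < y) \<and> k \<le> z) \<or> (\<forall>k\<in>\<tau>. k \<le> y) \<or> (\<forall>k\<in>\<tau>. \<not> (x < k \<and> k < z))"
    and p: "p \<in> cnv t \<tau>" "p \<in> cnv t {x,y,z}"
  shows "height t \<tau> p \<le> height t {x,y,z} p"
proof -
  have rho: "{x,y,z} \<subseteq> {1..n}" "card {x,y,z} \<le> 3" using xyz by (auto simp: card_insert_if)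
  have kn: "\<And>k. k \<in> \<tau> \<Longrightarrow> k \<in> {1..n}" using tau by auto
  have lt: "\<And>i j. i \<in> {1..n} \<Longrightarrow> j \<in> {1..n} \<Longrightarrow> i < j \<Longrightarrow> t i < t j" using tless[OF mono] by blast
  have le: "\<And>i j. i \<in> {1..n} \<Longrightarrow> j \<in> {1..n} \<Longrightarrow> i \<le> j \<Longrightarrow> t i \<le> t j" using tle[OF mono] by blast
  have X: "t x < t y" "t y < t z" using lt xyz by auto
  from cond consider (c1) "\<forall>k\<in>\<tau>. \<not> (x < k \<and> k < y) \<and> k \<le> z" | (c2) "\<forall>k\<in>\<tau>. k \<le> y"
    | (c3) "\<forall>k\<in>\<tau>. \<not> (x < k \<and> k < z)" by blast
  then show ?thesis
  proof cases
    case c1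
    show ?thesis
    proof (rule hsep[OF mono tau rho p, of "t x" "t y" "t z"])
      show "\<forall>k\<in>\<tau>. (t k - t x) * (t k - t y) * (t k - t z) \<le> 0"
      proof
        fix k assume k: "k \<in> \<tau>"
        show "(t k - t x) * (t k - t y) * (t k - t z) \<le> 0"
        proof (cases "k \<le> x")
          case True
          then show ?thesis using le[OF kn[OF k] xyz(1)] X by (intro p3a) auto
        next
          case False
          then have "y \<le> k" "k \<le> z" using c1 k by auto
          then show ?thesis using le[OF xyz(2) kn[OF k]] le[OF kn[OF k] xyz(3)] X by (intro p3b) auto
        qed
      qed
      show "\<forall>k\<in>{x,y,z}. (t k - t x) * (t k - t y) * (t k - t z) \<ge> 0" by simp
    qed
  next
    case c2
    show ?thesis
    proof (rule hsep[OF mono tau rho p, of "t x" "t x" "t y"])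
      show "\<forall>k\<in>\<tau>. (t k - t x) * (t k - t x) * (t k - t y) \<le> 0"
      proof
        fix k assume k: "k \<in> \<tau>"
        have "t k \<le> t y" using le[OF kn[OF k] xyz(2)] c2 k by auto
        then show "(t k - t x) * (t k - t x) * (t k - t y) \<le> 0"
          by (intro mult_nonneg_nonpos) auto
      qed
      show "\<forall>k\<in>{x,y,z}. (t k - t x) * (t k - t x) * (t k - t y) \<ge> 0"
        using X by auto
    qed
  next
    case c3
    define M where "M = t n + 1"
    have M: "t k < M" if "k \<in> {1..n}" for k
    proof -
      have "n \<in> {1..n}" using that by auto
      then have "t k \<le> t n" using le[OF that] that by auto
      then show ?thesis unfolding M_def by simp
    qed
    show ?thesis
    proof (rule hsep[OF mono tau rho p, of "t x" "t z" M])
      show "\<forall>k\<in>\<tau>. (t k - t x) * (t k - t z) * (t k - M) \<le> 0"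
      proof
        fix k assume k: "k \<in> \<tau>"
        have Mk: "t k - M \<le> 0" using M[OF kn[OF k]] by simp
        show "(t k - t x) * (t k - t z) * (t k - M) \<le> 0"
        proof (cases "k \<le> x")
          case True
          then show ?thesis using le[OF kn[OF k] xyz(1)] X Mk by (intro p3a) auto
        next
          case False
          then have "z \<le> k" using c3 k by auto
          then show ?thesis using le[OF xyz(3) kn[OF k]] X Mk by (intro p3b) auto
        qed
      qed
      show "\<forall>k\<in>{x,y,z}. (t k - t x) * (t k - t z) * (t k - M) \<ge> 0"
      proof -
        have "(t y - t x) * (t y - t z) * (t y - M) \<ge> 0" by (rule p3c) (use X M[OF xyz(2)] in auto)
        then show ?thesis by simp
      qed
    qed
  qed
qed

end


context fixes n :: nat and t :: "nat \<Rightarrow> real" assumes mono: "strict_mono_on {1..n} t"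
begin

lemma HL:
  assumes abc: "1 \<le> a" "a < b" "b < c" "c \<le> n" and tau: "\<tau> \<subseteq> {1..n}" "card \<tau> \<le> 3"
    and bab: "\<forall>y1\<in>\<tau>. \<forall>y2\<in>\<tau>. \<not> (a < y1 \<and> y1 < b \<and> b < y2)"
    and bbc: "\<forall>y1\<in>\<tau>. \<forall>y2\<in>\<tau>. \<not> (b < y1 \<and> y1 < c \<and> c < y2)"
    and bac: "\<forall>y1\<in>\<tau>. \<forall>y2\<in>\<tau>. \<not> (a < y1 \<and> y1 < c \<and> c < y2)"
  shows "below3_T t \<tau> (Tr n a b c)"
  unfolding below3_T_def
proof (intro ballI impI)
  fix p R assume p: "p \<in> cnv t \<tau>" and R: "R \<in> Tr n a b c" and pR: "p \<in> cnv t R"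
  have kn: "\<And>k. k \<in> \<tau> \<Longrightarrow> k \<le> n" using tau by auto
  have GS: "height t \<tau> p \<le> height t {x,y,z} p"
    if "x \<in> {1..n}" "y \<in> {1..n}" "z \<in> {1..n}" "x < y" "y < z" "R = {x,y,z}"
      "(\<forall>k\<in>\<tau>. \<not> (x < k \<and> k < y) \<and> k \<le> z) \<or> (\<forall>k\<in>\<tau>. k \<le> y) \<or> (\<forall>k\<in>\<tau>. \<not> (x < k \<and> k < z))" for x y z
    by (rule gsep[OF mono that(1-5) tau that(7) p]) (use pR that(6) in simp)
  have "R = {a,b,c} \<or> R \<in> fan a (b-1) b \<or> R \<in> fan b (c-1) c \<or> R \<in> fan 1 a n
   \<or> (c < n \<and> R = {a,c,n}) \<or> R \<in> fan c (n-1) n" using R unfolding Tr_mem .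
  then show "height t \<tau> p \<le> height t R p"
  proof (elim disjE conjE)
    assume R1: "R = {a,b,c}"
    have "(\<forall>k\<in>\<tau>. \<not> (a < k \<and> k < b) \<and> k \<le> c) \<or> (\<forall>k\<in>\<tau>. k \<le> b) \<or> (\<forall>k\<in>\<tau>. \<not> (a < k \<and> k < c))"
    proof (cases "\<exists>k\<in>\<tau>. a < k \<and> k < b")
      case True
      then have "\<forall>k\<in>\<tau>. k \<le> b" using bab by (meson not_le)
      then show ?thesis by blast
    next
      case False
      show ?thesis
      proof (cases "\<exists>k\<in>\<tau>. c < k")
        case True
        then have "\<forall>k\<in>\<tau>. \<not> (a < k \<and> k < c)" using bac by blast
        then show ?thesis by blast
      next
        case False': False
        then show ?thesis using False by (auto simp: not_less)
      qed
    qed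
    then show ?thesis using GS[of a b c] R1 abc by auto
  next
    assume "R \<in> fan a (b-1) b"
    then obtain i where i: "R = {i, Suc i, b}" "a \<le> i" "Suc i \<le> b - 1" unfolding fan_mem by blast
    have "(\<forall>k\<in>\<tau>. \<not> (i < k \<and> k < Suc i) \<and> k \<le> b) \<or> (\<forall>k\<in>\<tau>. k \<le> Suc i) \<or> (\<forall>k\<in>\<tau>. \<not> (i < k \<and> k < b))"
    proof (cases "\<forall>k\<in>\<tau>. k \<le> b")
      case True
      then show ?thesis by auto
    next
      case False
      then obtain k2 where "k2 \<in> \<tau>" "b < k2" by (auto simp: not_le)
      then have "\<forall>k\<in>\<tau>. \<not> (a < k \<and> k < b)" using bab by blast
      then show ?thesis using i by auto
    qed
    then show ?thesis using GS[of i "Suc i" b] i abc by auto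
  next
    assume "R \<in> fan b (c-1) c"
    then obtain i where i: "R = {i, Suc i, c}" "b \<le> i" "Suc i \<le> c - 1" unfolding fan_mem by blast
    have "(\<forall>k\<in>\<tau>. \<not> (i < k \<and> k < Suc i) \<and> k \<le> c) \<or> (\<forall>k\<in>\<tau>. k \<le> Suc i) \<or> (\<forall>k\<in>\<tau>. \<not> (i < k \<and> k < c))"
    proof (cases "\<forall>k\<in>\<tau>. k \<le> c")
      case True
      then show ?thesis by auto
    next
      case False
      then obtain k2 where "k2 \<in> \<tau>" "c < k2" by (auto simp: not_le)
      then have "\<forall>k\<in>\<tau>. \<not> (b < k \<and> k < c)" using bbc by blast
      then show ?thesis using i by auto
    qed
    then show ?thesis using GS[of i "Suc i" c] i abc by auto
  next
    assume "R \<in> fan 1 a n"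
    then obtain i where i: "R = {i, Suc i, n}" "1 \<le> i" "Suc i \<le> a" unfolding fan_mem by blast
    have "(\<forall>k\<in>\<tau>. \<not> (i < k \<and> k < Suc i) \<and> k \<le> n) \<or> (\<forall>k\<in>\<tau>. k \<le> Suc i) \<or> (\<forall>k\<in>\<tau>. \<not> (i < k \<and> k < n))"
      using kn by auto
    then show ?thesis using GS[of i "Suc i" n] i abc by auto
  next
    assume cn: "c < n" and R5: "R = {a,c,n}"
    have "(\<forall>k\<in>\<tau>. \<not> (a < k \<and> k < c) \<and> k \<le> n) \<or> (\<forall>k\<in>\<tau>. k \<le> c) \<or> (\<forall>k\<in>\<tau>. \<not> (a < k \<and> k < n))"
    proof (cases "\<forall>k\<in>\<tau>. \<not> (a < k \<and> k < c)")
      case True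
      then show ?thesis using kn by auto
    next
      case False
      then obtain k1 where "k1 \<in> \<tau>" "a < k1" "k1 < c" by auto
      then have "\<forall>k\<in>\<tau>. k \<le> c" using bac by (meson not_le)
      then show ?thesis by blast
    qed
    then show ?thesis using GS[of a c n] R5 abc cn by auto
  next
    assume "R \<in> fan c (n-1) n"
    then obtain i where i: "R = {i, Suc i, n}" "c \<le> i" "Suc i \<le> n - 1" unfolding fan_mem by blast
    have "(\<forall>k\<in>\<tau>. \<not> (i < k \<and> k < Suc i) \<and> k \<le> n) \<or> (\<forall>k\<in>\<tau>. k \<le> Suc i) \<or> (\<forall>k\<in>\<tau>. \<not> (i < k \<and> k < n))"
      using kn by auto
    then show ?thesis using GS[of i "Suc i" n] i abc by auto
  qed
qed

end


lemma three_sorted: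
  fixes S :: "nat set" assumes "card S = 3"
  shows "\<exists>a b c. a < b \<and> b < c \<and> S = {a,b,c}"
proof -
  obtain x y z where S: "S = {x,y,z}" "x \<noteq> y" "y \<noteq> z" "x \<noteq> z" using assms card_3_iff by metis
  have key: "\<And>a b c. a < b \<Longrightarrow> b < c \<Longrightarrow> S = {a,b,c} \<Longrightarrow> \<exists>a b c. a < b \<and> b < c \<and> S = {a,b,c}" by blast
  show ?thesis
  proof (cases x y rule: linorder_cases)
    case less
    show ?thesis
    proof (cases y z rule: linorder_cases)
      case less
      then show ?thesis using key \<open>x < y\<close> S by blast
    next
      case equal then show ?thesis using S by simp
    next
      case greater
      show ?thesis
      proof (cases x z rule: linorder_cases)
        case less then show ?thesis using key[of x z y] \<open>z < y\<close> S by (simp add: insert_commute)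
      next
        case equal then show ?thesis using S by simp
      next
        case greater then show ?thesis using key[of z x y] \<open>x < y\<close> S by (simp add: insert_commute)
      qed
    qed
  next
    case equal then show ?thesis using S by simp
  next
    case greater
    show ?thesis
    proof (cases x z rule: linorder_cases)
      case less then show ?thesis using key[of y x z] \<open>y < x\<close> S by (simp add: insert_commute)
    next
      case equal then show ?thesis using S by simp
    next
      case greater
      show ?thesis
      proof (cases y z rule: linorder_cases)
        case less then show ?thesis using key[of y z x] \<open>z < x\<close> S by (simp add: insert_commute)
      next
        case equal then show ?thesis using S by simp
      next
        case greater then show ?thesis using key[of z y x] \<open>y < x\<close> S by (simp add: insert_commute)
      qed
    qed
  qed
qed

lemma two_sorted:
  fixes S :: "nat set" assumes "card S = 2"
  shows "\<exists>a b. a < b \<and> S = {a,b}"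
proof -
  obtain x y where S: "S = {x,y}" "x \<noteq> y" using assms card_2_iff by metis
  show ?thesis
  proof (cases "x < y")
    case True then show ?thesis using S by blast
  next
    case False then have "y < x" using S by simp
    then show ?thesis using S by (metis insert_commute)
  qed
qed

lemma bc_lemma:
  assumes mono: "strict_mono_on {1..n} t"
    and sig: "\<sigma> \<subseteq> {1..n}" "card \<sigma> \<le> 3" and tau: "\<tau> \<subseteq> {1..n}" "card \<tau> \<le> 3"
    and hyp: "\<not> overlap t \<tau> \<sigma> \<or> below3 t \<tau> \<sigma>" and x: "x1 \<in> \<sigma>" "x2 \<in> \<sigma>"
  shows "\<forall>y1\<in>\<tau>. \<forall>y2\<in>\<tau>. \<not> (x1 < y1 \<and> y1 < x2 \<and> x2 < y2)"
proof (intro ballI notI)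
  fix y1 y2 assume y: "y1 \<in> \<tau>" "y2 \<in> \<tau>" and o: "x1 < y1 \<and> y1 < x2 \<and> x2 < y2"
  have "overlap t \<tau> \<sigma> \<and> \<not> below3 t \<tau> \<sigma>"
    by (rule cross[OF mono sig tau x y]) (use o in auto)
  then show False using hyp by blast
qed

theorem theorem3p1:
  fixes n :: nat and t :: "nat \<Rightarrow> real" and \<sigma> :: "nat set"
  assumes "3 \<le> n"
    and "strict_mono_on {1..n} t"
    and "edge_or_triangle n \<sigma>"
  shows "\<exists>T. triangulation n t T \<and> in_triang \<sigma> T \<and>
           (\<forall>\<tau>. edge_or_triangle n \<tau> \<and> \<tau> \<noteq> \<sigma> \<and>
                 (\<not> overlap t \<tau> \<sigma> \<or> below3 t \<tau> \<sigma>) \<longrightarrow> below3_T t \<tau> T)"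
proof -
  note mono = assms(2)
  have sig: "\<sigma> \<subseteq> {1..n}" "card \<sigma> = 2 \<or> card \<sigma> = 3" using assms(3) unfolding edge_or_triangle_def by auto
  have sig3: "card \<sigma> \<le> 3" using sig by auto
  have tauI: "\<tau> \<subseteq> {1..n} \<and> card \<tau> \<le> 3" if "edge_or_triangle n \<tau>" for \<tau>
    using that unfolding edge_or_triangle_def by auto
  have main: "\<exists>T. triangulation n t T \<and> in_triang \<sigma> T \<and>
           (\<forall>\<tau>. edge_or_triangle n \<tau> \<and> \<tau> \<noteq> \<sigma> \<and>
                 (\<not> overlap t \<tau> \<sigma> \<or> below3 t \<tau> \<sigma>) \<longrightarrow> below3_T t \<tau> T)"
    if abc: "1 \<le> a" "a < b" "b < c" "c \<le> n" and sub: "\<sigma> \<subseteq> {a,b,c}"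
      and bcs: "\<And>\<tau>. \<tau> \<subseteq> {1..n} \<Longrightarrow> card \<tau> \<le> 3 \<Longrightarrow> (\<not> overlap t \<tau> \<sigma> \<or> below3 t \<tau> \<sigma>) \<Longrightarrow>
          (\<forall>y1\<in>\<tau>. \<forall>y2\<in>\<tau>. \<not> (a < y1 \<and> y1 < b \<and> b < y2)) \<and>
          (\<forall>y1\<in>\<tau>. \<forall>y2\<in>\<tau>. \<not> (b < y1 \<and> y1 < c \<and> c < y2)) \<and>
          (\<forall>y1\<in>\<tau>. \<forall>y2\<in>\<tau>. \<not> (a < y1 \<and> y1 < c \<and> c < y2))"
    for a b c
  proof (intro exI conjI allI impI)
    show "triangulation n t (Tr n a b c)" by (rule Tr_triang[OF mono abc])
    show "in_triang \<sigma> (Tr n a b c)" unfolding in_triang_def using sub by (auto simp: Tr_def)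
    fix \<tau> assume h: "edge_or_triangle n \<tau> \<and> \<tau> \<noteq> \<sigma> \<and> (\<not> overlap t \<tau> \<sigma> \<or> below3 t \<tau> \<sigma>)"
    have tau: "\<tau> \<subseteq> {1..n}" "card \<tau> \<le> 3" using tauI h by auto
    note B = bcs[OF tau] h
    show "below3_T t \<tau> (Tr n a b c)"
      by (rule HL[OF mono abc tau]) (use B in auto)
  qed
  from sig(2) show ?thesis
  proof
    assume c2: "card \<sigma> = 2"
    then obtain a b where ab: "a < b" "\<sigma> = {a,b}" using two_sorted by blast
    have abn: "1 \<le> a" "b \<le> n" using sig(1) ab by auto
    have bab: "\<forall>y1\<in>\<tau>. \<forall>y2\<in>\<tau>. \<not> (a < y1 \<and> y1 < b \<and> b < y2)"
      if "\<tau> \<subseteq> {1..n}" "card \<tau> \<le> 3" "\<not> overlap t \<tau> \<sigma> \<or> below3 t \<tau> \<sigma>" for \<tau>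
      by (rule bc_lemma[OF mono sig(1) sig3 that]) (use ab in auto)
    have big: "\<forall>y1\<in>\<tau>. \<forall>y2\<in>\<tau>. \<not> (x1 < y1 \<and> y1 < x2 \<and> n < y2)" if "\<tau> \<subseteq> {1..n}" for \<tau> x1 x2
      using that by auto
    consider (s1) "Suc a < b" | (s2) "b = Suc a" "b < n" | (s3) "b = Suc a" "b = n" using ab abn by linarith
    then show ?thesis
    proof cases
      case s1
      show ?thesis
      proof (rule main[of a "Suc a" b])
        show "1 \<le> a" "a < Suc a" "Suc a < b" "b \<le> n" using s1 abn by auto
        show "\<sigma> \<subseteq> {a, Suc a, b}" using ab by auto
        fix \<tau> assume t3: "\<tau> \<subseteq> {1..n}" "card \<tau> \<le> 3" "\<not> overlap t \<tau> \<sigma> \<or> below3 t \<tau> \<sigma>"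
        have "\<forall>y1\<in>\<tau>. \<forall>y2\<in>\<tau>. \<not> (a < y1 \<and> y1 < b \<and> b < y2)" by (rule bab[OF t3])
        then show "(\<forall>y1\<in>\<tau>. \<forall>y2\<in>\<tau>. \<not> (a < y1 \<and> y1 < Suc a \<and> Suc a < y2)) \<and>
          (\<forall>y1\<in>\<tau>. \<forall>y2\<in>\<tau>. \<not> (Suc a < y1 \<and> y1 < b \<and> b < y2)) \<and>
          (\<forall>y1\<in>\<tau>. \<forall>y2\<in>\<tau>. \<not> (a < y1 \<and> y1 < b \<and> b < y2))" by auto
      qed
    next
      case s2
      show ?thesis
      proof (rule main[of a b n])
        show "1 \<le> a" "a < b" "b < n" "n \<le> n" using s2 abn ab by auto
        show "\<sigma> \<subseteq> {a, b, n}" using ab by auto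
        fix \<tau> assume t3: "\<tau> \<subseteq> {1..n}" "card \<tau> \<le> 3" "\<not> overlap t \<tau> \<sigma> \<or> below3 t \<tau> \<sigma>"
        show "(\<forall>y1\<in>\<tau>. \<forall>y2\<in>\<tau>. \<not> (a < y1 \<and> y1 < b \<and> b < y2)) \<and>
          (\<forall>y1\<in>\<tau>. \<forall>y2\<in>\<tau>. \<not> (b < y1 \<and> y1 < n \<and> n < y2)) \<and>
          (\<forall>y1\<in>\<tau>. \<forall>y2\<in>\<tau>. \<not> (a < y1 \<and> y1 < n \<and> n < y2))"
          using big[OF t3(1)] s2 by auto
      qed
    next
      case s3
      show ?thesis
      proof (rule main[of "n-2" "n-1" n])
        show "1 \<le> n - 2" "n - 2 < n - 1" "n - 1 < n" "n \<le> n" using assms(1) by auto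
        show "\<sigma> \<subseteq> {n-2, n-1, n}" using ab s3 by auto
        fix \<tau> assume t3: "\<tau> \<subseteq> {1..n}" "card \<tau> \<le> 3" "\<not> overlap t \<tau> \<sigma> \<or> below3 t \<tau> \<sigma>"
        show "(\<forall>y1\<in>\<tau>. \<forall>y2\<in>\<tau>. \<not> (n-2 < y1 \<and> y1 < n-1 \<and> n-1 < y2)) \<and>
          (\<forall>y1\<in>\<tau>. \<forall>y2\<in>\<tau>. \<not> (n-1 < y1 \<and> y1 < n \<and> n < y2)) \<and>
          (\<forall>y1\<in>\<tau>. \<forall>y2\<in>\<tau>. \<not> (n-2 < y1 \<and> y1 < n \<and> n < y2))"
          using big[OF t3(1)] by auto
      qed
    qed
  next
    assume c3: "card \<sigma> = 3"
    then obtain a b c where abc: "a < b" "b < c" "\<sigma> = {a,b,c}" using three_sorted by blast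
    have abn: "1 \<le> a" "c \<le> n" using sig(1) abc by auto
    show ?thesis
    proof (rule main[of a b c])
      show "1 \<le> a" "a < b" "b < c" "c \<le> n" using abc abn by auto
      show "\<sigma> \<subseteq> {a, b, c}" using abc by auto
      fix \<tau> assume t3: "\<tau> \<subseteq> {1..n}" "card \<tau> \<le> 3" "\<not> overlap t \<tau> \<sigma> \<or> below3 t \<tau> \<sigma>"
      have m: "a \<in> \<sigma>" "b \<in> \<sigma>" "c \<in> \<sigma>" using abc by auto
      show "(\<forall>y1\<in>\<tau>. \<forall>y2\<in>\<tau>. \<not> (a < y1 \<and> y1 < b \<and> b < y2)) \<and>
          (\<forall>y1\<in>\<tau>. \<forall>y2\<in>\<tau>. \<not> (b < y1 \<and> y1 < c \<and> c < y2)) \<and>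
          (\<forall>y1\<in>\<tau>. \<forall>y2\<in>\<tau>. \<not> (a < y1 \<and> y1 < c \<and> c < y2))"
        using bc_lemma[OF mono sig(1) sig3 t3 m(1) m(2)] bc_lemma[OF mono sig(1) sig3 t3 m(2) m(3)]
          bc_lemma[OF mono sig(1) sig3 t3 m(1) m(3)] by blast
    qed
  qed
qed

end
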